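(* Let $\Sigma=(A_t,B_t,C_t,D_t)$ be an $(m,n)$-multirate system with state space $X$, input space $U$ and output space $Y$, and let $q\in\mathbb Z^+$ with $m/q,n/q\in\mathbb Z$. Put $T:=m\overline n$, $T':=T/q$, $\epsilon:=e^{2\pi j/T}$, and let $\widehat A_k,\widehat B_k,\widehat C_k$ ($k\in\mathbb Z$, indices mod $T$) be the period-$T$ Fourier coefficients of $A,B,C$. Define $T'$-periodic sequences $\widetilde A_t:X^q\to X^q$, $\widetilde B_t:U\to X^q$, $\widetilde C_t:X^q\to Y$, $\widetilde D_t:U\to Y$ by $\widetilde A_t=\sum_{r=0}^{T'-1}\widehat{\widetilde A}_re^{2\pi jtr/T'}$ (and similarly for $\widetilde B,\widetilde C$), where for $0\le r<T'$ \[ \widehat{\widetilde A}_r=\big(\widehat A_{rq+i-k}\,\epsilon^{-k}\big)_{i,k=0}^{q-1},\qquad \widehat{\widetilde B}_r=\mathrm{col}\big(\widehat B_{rq+i}\big)_{i=0}^{q-1},\qquad \widehat{\widetilde C}_r=\mathrm{row}\big(\widehat C_{rq-k}\,\epsilon^{-k}\big)_{k=0}^{q-1}, \] and $\widetilde D_t:=\frac1q\sum_{k=0}^{q-1}D_{t+kT'}$ for $0\le t<T'$. Then the $(m/q,n/q)$-multirate system $\widetilde\Sigma=(\widetilde A_t,\widetilde B_t,\widetilde C_t,\widetilde D_t)$ with state space $X^q$ (input space $U$, output space $Y$) is a $|\cdot|$-optimal $(m/q,n/q)$-multirate approximation of $\Sigma$. The statement remains true if $\widetilde A,\widetilde B,\widetilde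 C$ are instead defined through \[ \widehat{\widetilde A}_r=\big(\epsilon^{-i}\,\widehat A_{rq+i-k}\big)_{i,k=0}^{q-1},\qquad \widehat{\widetilde B}_r=\mathrm{col}\big(\epsilon^{-i}\,\widehat B_{rq+i}\big)_{i=0}^{q-1},\qquad \widehat{\widetilde C}_r=\mathrm{row}\big(\widehat C_{rq-k}\big)_{k=0}^{q-1}. \]
   Context: $j$ is the imaginary unit; $U,X,Y$ are separable complex Hilbert spaces. Upsampler $(\uparrow_q v)_t=v_{t/q}$ if $q\mid t$, else $0$; downsampler $(\downarrow_q v)_t=v_{qt}$. For $m,n\in\mathbb Z^+$, $c=\gcd(m,n)$, $\overline m=m/c$, $\overline n=n/c$ (note $(m/q,n/q)$ has the same $\overline m,\overline n$). An $(m,n)$-multirate system consists of $m\overline n$-periodic bounded operator sequences $A_t:X\to X$, $B_t:U\to X$, $C_t:X\to Y$, $D_t:U\to Y$ with $x_{t+1}=A_tx_t+B_tu^\circ_t$, $y^\circ_t=C_tx_t+D_tu^\circ_t$, $u^\circ=\uparrow_{\overline m}u$, $y=\downarrow_{\overline n}y^\circ$; it is also $(km,kn)$-multirate for all $k\in\mathbb Z^+$. Fourier coefficients of a $T$-periodic sequence: $\widehat A_k=\frac1T\sum_{t=0}^{T-1}A_te^{-2\pi jtk/T}$. In the claim, $(\cdot)_{i,k=0}^{q-1}$ denotes the $q\times q$ block operator matrix on $X^q$ with the given $(i,k)$ entry, col a column and row a row of operators. Harmonic transfer function: with $\mathcal T_T(A)$ the $T\times T$ block matrix with entry $\widehat A_{(r-\ell)\bmod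 T}$ at $(r,\ell)$, $\mathcal N_T:=\mathrm{diag}(e^{2\pi jk/T}I)_{k=0}^{T-1}$, $\Pi_{T,1,q}:V^T\to V^{qT}$ stacking $q$ copies and $\Pi^*_{T,1,q}$ summing the $q$ blocks, an $(M,N)$-multirate system has harmonic transfer function $\mathcal H(z)=\Pi_{M,1,\overline n}^*\big(z\mathcal C(\mathcal N_{M\overline n}-z\mathcal A)^{-1}\mathcal B+\mathcal D\big)\Pi_{N,1,\overline m}/\overline m:U^N\to Y^M$ (defined for $z$ near $0$), with $\mathcal A,\dots,\mathcal D$ the period-$M\overline n$ Toeplitz transforms. Norm: with $H_i(z)=\sum_kz^kh_{i,k}$ the entry in row $i$, column $0$ of $\mathcal H(z)$, $|\mathcal H|^2:=\sum_{i=0}^{M-1}\sum_\ell\sum_{k\ge0}\|h_{i,k}e_\ell\|^2\in[0,\infty]$, $(e_\ell)$ an orthonormal basis of $U$. Error system: for $\Sigma$ $(c\overline m,c\overline n)$-multirate and $\widehat\Sigma$ $(\widehat c\,\overline m,\widehat c\,\overline n)$-multirate, $\Sigma-\widehat\Sigma$ is the $(C\overline m,C\overline n)$-multirate system, $C=\mathrm{lcm}(c,\widehat c)$, with state space $X\oplus\widehat X$ and operators $\mathrm{diag}(A_t,\widehat A_t)$, $\mathrm{col}(B_t,\widehat B_t)$, $\mathrm{row}(C_t,-\widehat C_t)$, $D_t-\widehat D_t$. An $(m',n')$-multirate system $\widetilde\Sigma$ (input $U$, output $Y$) is a $|\cdot|$-optimal $(m',n')$-multirate approximation of $\Sigma$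 if $|\mathcal G_{\Sigma-\widetilde\Sigma}|\le|\mathcal G_{\Sigma-\widehat\Sigma}|$ for all $(m',n')$-multirate $\widehat\Sigma$ with input $U$ and output $Y$, where $\mathcal G_{\Sigma-\widehat\Sigma}$ is the harmonic transfer function of the error system. *)

theory Defs
  imports "HOL-Analysis.Analysis"
begin

text \<open>A complex Hilbert space is modelled as a real Hilbert space (real inner
product = real part of the complex inner product) equipped with a complex
scalar multiplication extending the real one, such that multiplication by the
imaginary unit is an isometry for the real inner product.\<close>

class chilbert = real_inner + complete_space +
  fixes scaleC :: "complex \<Rightarrow> 'a \<Rightarrow> 'a" (infixr \<open>*\<^sub>C\<close> 75)
  assumes scaleC_add_right: "a *\<^sub>C (x + y) = a *\<^sub>C x + a *\<^sub>C y"
    and scaleC_add_left: "(a + b) *\<^sub>C x = a *\<^sub>C x + b *\<^sub>C x"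
    and scaleC_scaleC: "a *\<^sub>C (b *\<^sub>C x) = (a * b) *\<^sub>C x"
    and scaleC_of_real: "complex_of_real r *\<^sub>C x = r *\<^sub>R x"
    and inner_scaleC_ii: "inner (\<i> *\<^sub>C x) (\<i> *\<^sub>C y) = inner x y"

instantiation prod :: (chilbert, chilbert) chilbert
begin
definition scaleC_prod_def: "c *\<^sub>C x = (c *\<^sub>C fst x, c *\<^sub>C snd x)"
instance
  by standard (auto simp: scaleC_prod_def scaleC_add_right scaleC_add_left scaleC_scaleC
      scaleC_of_real inner_scaleC_ii inner_prod_def)
end

instantiation vec :: (chilbert, finite) chilbert
begin
definition scaleC_vec_def: "c *\<^sub>C x = (\<chi> i. c *\<^sub>C (x $ i))"
instance
  by standard (auto simp: scaleC_vec_def vec_eq_iff scaleC_add_right scaleC_add_left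
      scaleC_scaleC scaleC_of_real inner_scaleC_ii inner_vec_def)
end

definition cinner :: "'a::chilbert \<Rightarrow> 'a \<Rightarrow> complex" where
  "cinner x y = Complex (inner x y) (inner x (\<i> *\<^sub>C y))"

definition cspan :: "'a::chilbert set \<Rightarrow> 'a set" where
  "cspan S = {x. \<exists>F c. finite F \<and> F \<subseteq> S \<and> x = (\<Sum>f\<in>F. c f *\<^sub>C f)}"

definition onb :: "'a::chilbert set \<Rightarrow> bool" where
  "onb E \<longleftrightarrow> (\<forall>e\<in>E. norm e = 1) \<and> (\<forall>e\<in>E. \<forall>e'\<in>E. e \<noteq> e' \<longrightarrow> cinner e e' = 0)
      \<and> closure (cspan E) = UNIV"

definition separable_hilbert :: "'a::chilbert itself \<Rightarrow> bool" where
  "separable_hilbert _ \<longleftrightarrow> separable_space (euclidean :: 'a topology)"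

definition bounded_clinear :: "('a::chilbert \<Rightarrow> 'b::chilbert) \<Rightarrow> bool" where
  "bounded_clinear f \<longleftrightarrow> bounded_linear f \<and> (\<forall>c x. f (c *\<^sub>C x) = c *\<^sub>C f x)"

definition cbar :: "nat \<Rightarrow> nat \<Rightarrow> nat" where "cbar m n = gcd m n"
definition mbar :: "nat \<Rightarrow> nat \<Rightarrow> nat" where "mbar m n = m div gcd m n"
definition nbar :: "nat \<Rightarrow> nat \<Rightarrow> nat" where "nbar m n = n div gcd m n"
definition period :: "nat \<Rightarrow> nat \<Rightarrow> nat" where "period m n = m * nbar m n"

definition multirate ::
  "nat \<Rightarrow> nat \<Rightarrow> (nat \<Rightarrow> 'x::chilbert \<Rightarrow> 'x) \<Rightarrow> (nat \<Rightarrow> 'u::chilbert \<Rightarrow> 'x)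
     \<Rightarrow> (nat \<Rightarrow> 'x \<Rightarrow> 'y::chilbert) \<Rightarrow> (nat \<Rightarrow> 'u \<Rightarrow> 'y) \<Rightarrow> bool" where
  "multirate m n A B C D \<longleftrightarrow> 0 < m \<and> 0 < n \<and>
     (\<forall>t. A (t + period m n) = A t \<and> B (t + period m n) = B t \<and>
          C (t + period m n) = C t \<and> D (t + period m n) = D t) \<and>
     (\<forall>t. bounded_clinear (A t) \<and> bounded_clinear (B t) \<and>
          bounded_clinear (C t) \<and> bounded_clinear (D t))"

definition fourier :: "nat \<Rightarrow> (nat \<Rightarrow> 'a \<Rightarrow> 'b::chilbert) \<Rightarrow> int \<Rightarrow> 'a \<Rightarrow> 'b" where
  "fourier T F k x = (1 / real T) *\<^sub>R
      (\<Sum>t<T. cis (- 2 * pi * real t * real_of_int k / real T) *\<^sub>C F t x)"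

text \<open>Block vectors in V^P are functions nat => V vanishing outside {..<P};
block operator matrices are functions nat => nat => (V => W).\<close>

definition toep :: "nat \<Rightarrow> (nat \<Rightarrow> 'a \<Rightarrow> 'b::chilbert) \<Rightarrow> nat \<Rightarrow> nat \<Rightarrow> 'a \<Rightarrow> 'b" where
  "toep P F r l = fourier P F ((int r - int l) mod int P)"

definition bvecs :: "nat \<Rightarrow> (nat \<Rightarrow> 'a::zero) set" where
  "bvecs P = {v. \<forall>r\<ge>P. v r = 0}"

text \<open>The operator N_P - z A (A the Toeplitz transform) on X^P.\<close>
definition resolv_op :: "nat \<Rightarrow> (nat \<Rightarrow> 'x::chilbert \<Rightarrow> 'x) \<Rightarrow> complex \<Rightarrow> (nat \<Rightarrow> 'x) \<Rightarrow> nat \<Rightarrow> 'x" where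
  "resolv_op P A z v = (\<lambda>r. if r < P then
      cis (2 * pi * real r / real P) *\<^sub>C v r - z *\<^sub>C (\<Sum>l<P. toep P A r l (v l)) else 0)"

text \<open>Entry in row i, column 0 of the harmonic transfer function H(z) of an
(M,N)-multirate system, applied to u.\<close>
definition htf_entry ::
  "nat \<Rightarrow> nat \<Rightarrow> (nat \<Rightarrow> 'x::chilbert \<Rightarrow> 'x) \<Rightarrow> (nat \<Rightarrow> 'u::chilbert \<Rightarrow> 'x)
     \<Rightarrow> (nat \<Rightarrow> 'x \<Rightarrow> 'y::chilbert) \<Rightarrow> (nat \<Rightarrow> 'u \<Rightarrow> 'y) \<Rightarrow> nat \<Rightarrow> complex \<Rightarrow> 'u \<Rightarrow> 'y" where
  "htf_entry M N A B C D i z u =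
     (let P = period M N;
          w = inv_into (bvecs P) (resolv_op P A z)
                (\<lambda>l. if l < P then (\<Sum>s'\<in>{s'. s' < P \<and> s' mod N = 0}. toep P B l s' u) else 0)
      in (1 / real (mbar M N)) *\<^sub>R
           (\<Sum>s\<in>{s. s < P \<and> s mod M = i}.
              z *\<^sub>C (\<Sum>l<P. toep P C s l (w l))
              + (\<Sum>s'\<in>{s'. s' < P \<and> s' mod N = 0}. toep P D s s' u)))"

definition htf_coeff ::
  "nat \<Rightarrow> nat \<Rightarrow> (nat \<Rightarrow> 'x::chilbert \<Rightarrow> 'x) \<Rightarrow> (nat \<Rightarrow> 'u::chilbert \<Rightarrow> 'x)
     \<Rightarrow> (nat \<Rightarrow> 'x \<Rightarrow> 'y::chilbert) \<Rightarrow> (nat \<Rightarrow> 'u \<Rightarrow> 'y) \<Rightarrow> nat \<Rightarrow> nat \<Rightarrow> 'u \<Rightarrow> 'y" where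
  "htf_coeff M N A B C D i = (THE h. \<exists>\<rho>>0. \<forall>z. norm z < \<rho> \<longrightarrow>
      (\<forall>u. (\<lambda>k. z ^ k *\<^sub>C h k u) sums htf_entry M N A B C D i z u))"

definition hnorm_sq :: "'u::chilbert set \<Rightarrow> nat \<Rightarrow> (nat \<Rightarrow> nat \<Rightarrow> 'u \<Rightarrow> 'y::chilbert) \<Rightarrow> ennreal" where
  "hnorm_sq E M h = (\<Sum>i<M. \<Sum>\<^sub>\<infinity>e\<in>E. \<Sum>\<^sub>\<infinity>k\<in>(UNIV::nat set). ennreal ((norm (h i k e))\<^sup>2))"

definition err_M :: "nat \<Rightarrow> nat \<Rightarrow> nat \<Rightarrow> nat \<Rightarrow> nat" where
  "err_M m n m' n' = lcm (gcd m n) (gcd m' n') * mbar m n"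
definition err_N :: "nat \<Rightarrow> nat \<Rightarrow> nat \<Rightarrow> nat \<Rightarrow> nat" where
  "err_N m n m' n' = lcm (gcd m n) (gcd m' n') * nbar m n"

definition err_norm_sq ::
  "'u::chilbert set \<Rightarrow> nat \<Rightarrow> nat \<Rightarrow> (nat \<Rightarrow> 'x::chilbert \<Rightarrow> 'x) \<Rightarrow> (nat \<Rightarrow> 'u \<Rightarrow> 'x)
     \<Rightarrow> (nat \<Rightarrow> 'x \<Rightarrow> 'y::chilbert) \<Rightarrow> (nat \<Rightarrow> 'u \<Rightarrow> 'y)
   \<Rightarrow> nat \<Rightarrow> nat \<Rightarrow> (nat \<Rightarrow> 'z::chilbert \<Rightarrow> 'z) \<Rightarrow> (nat \<Rightarrow> 'u \<Rightarrow> 'z)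
     \<Rightarrow> (nat \<Rightarrow> 'z \<Rightarrow> 'y) \<Rightarrow> (nat \<Rightarrow> 'u \<Rightarrow> 'y) \<Rightarrow> ennreal" where
  "err_norm_sq E m n A B C D m' n' A' B' C' D' =
     hnorm_sq E (err_M m n m' n')
       (htf_coeff (err_M m n m' n') (err_N m n m' n')
          (\<lambda>t (x, z). (A t x, A' t z))
          (\<lambda>t u. (B t u, B' t u))
          (\<lambda>t (x, z). C t x - C' t z)
          (\<lambda>t u. D t u - D' t u))"

definition mr_optimal ::
  "'z::chilbert itself \<Rightarrow> 'u::chilbert set \<Rightarrow> nat \<Rightarrow> nat \<Rightarrow> (nat \<Rightarrow> 'x::chilbert \<Rightarrow> 'x) \<Rightarrow> (nat \<Rightarrow> 'u \<Rightarrow> 'x)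
     \<Rightarrow> (nat \<Rightarrow> 'x \<Rightarrow> 'y::chilbert) \<Rightarrow> (nat \<Rightarrow> 'u \<Rightarrow> 'y)
   \<Rightarrow> nat \<Rightarrow> nat \<Rightarrow> (nat \<Rightarrow> 'w::chilbert \<Rightarrow> 'w) \<Rightarrow> (nat \<Rightarrow> 'u \<Rightarrow> 'w)
     \<Rightarrow> (nat \<Rightarrow> 'w \<Rightarrow> 'y) \<Rightarrow> (nat \<Rightarrow> 'u \<Rightarrow> 'y) \<Rightarrow> bool" where
  "mr_optimal _ E m n A B C D m' n' At Bt Ct Dt \<longleftrightarrow>
     multirate m' n' At Bt Ct Dt \<and>
     (\<forall>(Ah :: nat \<Rightarrow> 'z \<Rightarrow> 'z) Bh Ch Dh. multirate m' n' Ah Bh Ch Dh \<longrightarrow>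
        err_norm_sq E m n A B C D m' n' At Bt Ct Dt \<le> err_norm_sq E m n A B C D m' n' Ah Bh Ch Dh)"

text \<open>Enumeration of the block index type 'q by {0..<q}.\<close>
definition ix :: "'q::finite \<Rightarrow> nat" where
  "ix = (SOME f. bij_betw f (UNIV :: 'q set) {..<CARD('q)})"

definition epsm :: "nat \<Rightarrow> nat \<Rightarrow> complex" where
  "epsm T k = cis (- 2 * pi * real k / real T)"  \<comment> \<open>\<epsilon>^{-k}, \<epsilon> = e^{2\<pi>j/T}\<close>

context
  fixes m n q :: nat
begin

definition T0 :: nat where "T0 = period m n"
definition T1 :: nat where "T1 = T0 div q"

definition fidx :: "nat \<Rightarrow> int \<Rightarrow> int" where "fidx r d = (int (r * q) + d) mod int T0"

definition tD :: "(nat \<Rightarrow> 'u::chilbert \<Rightarrow> 'y::chilbert) \<Rightarrow> nat \<Rightarrow> 'u \<Rightarrow> 'y" where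
  "tD D t u = (1 / real q) *\<^sub>R (\<Sum>k<q. D (t mod T1 + k * T1) u)"

definition tAh1 :: "(nat \<Rightarrow> 'x::chilbert \<Rightarrow> 'x) \<Rightarrow> nat \<Rightarrow> 'x ^ 'q::finite \<Rightarrow> 'x ^ 'q" where
  "tAh1 A r v = (\<chi> a. \<Sum>b\<in>UNIV. fourier T0 A (fidx r (int (ix a) - int (ix b))) (epsm T0 (ix b) *\<^sub>C (v $ b)))"
definition tBh1 :: "(nat \<Rightarrow> 'u::chilbert \<Rightarrow> 'x::chilbert) \<Rightarrow> nat \<Rightarrow> 'u \<Rightarrow> 'x ^ 'q::finite" where
  "tBh1 B r u = (\<chi> a. fourier T0 B (fidx r (int (ix a))) u)"
definition tCh1 :: "(nat \<Rightarrow> 'x::chilbert \<Rightarrow> 'y::chilbert) \<Rightarrow> nat \<Rightarrow> 'x ^ 'q::finite \<Rightarrow> 'y" where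
  "tCh1 C r v = (\<Sum>b\<in>UNIV. fourier T0 C (fidx r (- int (ix b))) (epsm T0 (ix b) *\<^sub>C (v $ b)))"

definition tAh2 :: "(nat \<Rightarrow> 'x::chilbert \<Rightarrow> 'x) \<Rightarrow> nat \<Rightarrow> 'x ^ 'q::finite \<Rightarrow> 'x ^ 'q" where
  "tAh2 A r v = (\<chi> a. epsm T0 (ix a) *\<^sub>C (\<Sum>b\<in>UNIV. fourier T0 A (fidx r (int (ix a) - int (ix b))) (v $ b)))"
definition tBh2 :: "(nat \<Rightarrow> 'u::chilbert \<Rightarrow> 'x::chilbert) \<Rightarrow> nat \<Rightarrow> 'u \<Rightarrow> 'x ^ 'q::finite" where
  "tBh2 B r u = (\<chi> a. epsm T0 (ix a) *\<^sub>C fourier T0 B (fidx r (int (ix a))) u)"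
definition tCh2 :: "(nat \<Rightarrow> 'x::chilbert \<Rightarrow> 'y::chilbert) \<Rightarrow> nat \<Rightarrow> 'x ^ 'q::finite \<Rightarrow> 'y" where
  "tCh2 C r v = (\<Sum>b\<in>UNIV. fourier T0 C (fidx r (- int (ix b))) (v $ b))"

definition synth :: "(nat \<Rightarrow> 'a \<Rightarrow> 'b::chilbert) \<Rightarrow> nat \<Rightarrow> 'a \<Rightarrow> 'b" where
  "synth F t x = (\<Sum>r<T1. cis (2 * pi * real t * real r / real T1) *\<^sub>C F r x)"

end

end

theory Submission
  imports Defs
begin

subclass (in chilbert) banach ..

lemma scaleC_one[simp]: "(1::complex) *\<^sub>C (x::'a::chilbert) = x"
  using scaleC_of_real[of 1 x] by simp

lemma scaleC_zero_left[simp]: "(0::complex) *\<^sub>C (x::'a::chilbert) = 0"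
  using scaleC_of_real[of 0 x] by simp

lemma scaleC_zero_right[simp]: "c *\<^sub>C (0::'a::chilbert) = 0"
  using scaleC_add_right[of c 0 0] by simp

lemma scaleC_minus_right: "c *\<^sub>C (- x::'a::chilbert) = - (c *\<^sub>C x)"
  using scaleC_add_right[of c x "-x"] by (simp add: eq_neg_iff_add_eq_0 add.commute)

lemma scaleC_diff_right: "c *\<^sub>C (x - y::'a::chilbert) = c *\<^sub>C x - c *\<^sub>C y"
  using scaleC_add_right[of c x "-y"] by (simp add: scaleC_minus_right)

lemma scaleC_sum_right: "c *\<^sub>C (\<Sum>i\<in>I. f i::'a::chilbert) = (\<Sum>i\<in>I. c *\<^sub>C f i)"
  by (induction I rule: infinite_finite_induct) (auto simp: scaleC_add_right)

lemma scaleC_sum_left: "(\<Sum>i\<in>I. f i) *\<^sub>C (x::'a::chilbert) = (\<Sum>i\<in>I. f i *\<^sub>C x)"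
  by (induction I rule: infinite_finite_induct) (auto simp: scaleC_add_left)

lemma scaleR_scaleC: "r *\<^sub>R (c *\<^sub>C (x::'a::chilbert)) = (complex_of_real r * c) *\<^sub>C x"
  by (simp add: scaleC_of_real[symmetric] scaleC_scaleC)

lemma scaleC_scaleR: "c *\<^sub>C (r *\<^sub>R (x::'a::chilbert)) = (complex_of_real r * c) *\<^sub>C x"
  by (simp add: scaleC_of_real[symmetric] scaleC_scaleC mult.commute)

lemma scaleC_ii_ii: "\<i> *\<^sub>C (\<i> *\<^sub>C (x::'a::chilbert)) = - x"
proof -
  have "\<i> *\<^sub>C (\<i> *\<^sub>C x) = complex_of_real (-1) *\<^sub>C x" by (simp add: scaleC_scaleC)
  also have "\<dots> = - x" by (subst scaleC_of_real) simp
  finally show ?thesis .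
qed

lemma inner_ii_self: "inner (x::'a::chilbert) (\<i> *\<^sub>C x) = 0"
proof -
  have "inner (\<i> *\<^sub>C (\<i> *\<^sub>C x)) (\<i> *\<^sub>C x) = inner (\<i> *\<^sub>C x) x"
    by (rule inner_scaleC_ii)
  hence "- inner x (\<i> *\<^sub>C x) = inner x (\<i> *\<^sub>C x)"
    by (simp add: scaleC_ii_ii inner_commute)
  thus ?thesis by simp
qed

lemma scaleC_Complex: "Complex a b *\<^sub>C (x::'a::chilbert) = a *\<^sub>R x + b *\<^sub>R (\<i> *\<^sub>C x)"
proof -
  have "Complex a b = complex_of_real a + complex_of_real b * \<i>"
    by (simp add: complex_eq_iff)
  thus ?thesis by (simp add: scaleC_add_left scaleC_of_real[symmetric] scaleC_scaleC)
qed

lemma norm_scaleC[simp]: "norm (c *\<^sub>C (x::'a::chilbert)) = cmod c * norm x"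
proof -
  obtain a b where c: "c = Complex a b" by (metis complex.exhaust)
  have ii: "inner (\<i> *\<^sub>C x) (\<i> *\<^sub>C x) = inner x x" by (rule inner_scaleC_ii)
  have "(norm (c *\<^sub>C x))\<^sup>2 = inner (a *\<^sub>R x + b *\<^sub>R (\<i> *\<^sub>C x)) (a *\<^sub>R x + b *\<^sub>R (\<i> *\<^sub>C x))"
    by (simp add: c scaleC_Complex power2_norm_eq_inner)
  also have "\<dots> = (a\<^sup>2 + b\<^sup>2) * inner x x"
    by (simp add: inner_add_left inner_add_right inner_ii_self inner_commute[of "\<i> *\<^sub>C x" x] ii
        power2_eq_square algebra_simps)
  also have "\<dots> = (cmod c * norm x)\<^sup>2"
    by (simp add: c cmod_def power2_norm_eq_inner power_mult_distrib)
  finally show ?thesis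
    by (metis norm_ge_zero power2_eq_iff_nonneg zero_le_mult_iff norm_ge_zero)
qed


lemma bounded_linear_scaleC: "bounded_linear (\<lambda>x::'a::chilbert. c *\<^sub>C x)"
proof (rule bounded_linear_intro[where K="cmod c"])
  show "c *\<^sub>C (x + y) = c *\<^sub>C x + c *\<^sub>C y" for x y :: 'a by (rule scaleC_add_right)
  show "c *\<^sub>C (r *\<^sub>R x) = r *\<^sub>R (c *\<^sub>C x)" for r and x :: 'a
    by (simp add: scaleC_scaleR scaleR_scaleC mult.commute)
  show "norm (c *\<^sub>C x) \<le> norm x * cmod c" for x :: 'a by (simp add: mult.commute)
qed

lemma bcl_scaleC: "bounded_clinear (\<lambda>x::'a::chilbert. c *\<^sub>C x)"
  unfolding bounded_clinear_def by (simp add: bounded_linear_scaleC scaleC_scaleC mult.commute)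

lemma bcl_id: "bounded_clinear (\<lambda>x::'a::chilbert. x)"
  unfolding bounded_clinear_def by (simp add: bounded_linear_ident)

lemma bcl_comp: "bounded_clinear f \<Longrightarrow> bounded_clinear g \<Longrightarrow> bounded_clinear (\<lambda>x. f (g x))"
  unfolding bounded_clinear_def using bounded_linear_compose[of f g] by (auto simp: o_def)

lemma bcl_add: "bounded_clinear f \<Longrightarrow> bounded_clinear g \<Longrightarrow> bounded_clinear (\<lambda>x. f x + g x)"
  unfolding bounded_clinear_def by (auto intro: bounded_linear_add simp: scaleC_add_right)

lemma bcl_zero: "bounded_clinear (\<lambda>x::'a::chilbert. 0::'b::chilbert)"
  unfolding bounded_clinear_def by (simp add: bounded_linear_zero)

lemma bcl_sum: "(\<And>i. i \<in> I \<Longrightarrow> bounded_clinear (f i)) \<Longrightarrow> bounded_clinear (\<lambda>x. \<Sum>i\<in>I. f i x)"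
proof (induction I rule: infinite_finite_induct)
  case (infinite I) then show ?case by (simp add: bcl_zero)
next
  case empty then show ?case by (simp add: bcl_zero)
next
  case (insert i I) then show ?case by (simp add: bcl_add)
qed

lemma bcl_scaleR: "bounded_clinear f \<Longrightarrow> bounded_clinear (\<lambda>x. r *\<^sub>R f x)"
  unfolding bounded_clinear_def
  by (auto intro: bounded_linear_compose[OF bounded_linear_scaleR_right, of f r, unfolded o_def]
        simp: scaleR_scaleC scaleC_scaleR)

lemma bcl_diff: "bounded_clinear f \<Longrightarrow> bounded_clinear g \<Longrightarrow> bounded_clinear (\<lambda>x. f x - g x)"
  using bcl_add[of f "\<lambda>x. (-1::real) *\<^sub>R g x"] bcl_scaleR[of g "-1"] by simp

lemma bcl_fourier: "(\<And>t. bounded_clinear (F t)) \<Longrightarrow> bounded_clinear (fourier T F k)"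
  unfolding fourier_def[abs_def]
  by (intro bcl_scaleR bcl_sum bcl_comp[OF bcl_scaleC]) auto

lemma bcl_vec_nth: "bounded_clinear (\<lambda>v::'a::chilbert^'n. v $ b)"
  unfolding bounded_clinear_def by (simp add: scaleC_vec_def bounded_linear_vec_nth)

lemma bounded_linear_vec_lambda:
  assumes "\<And>a. bounded_linear (f a)"
  shows "bounded_linear (\<lambda>x. (\<chi> a. f a x) :: 'b::real_normed_vector^'n)"
proof -
  have "linear (\<lambda>x. (\<chi> a. f a x) :: 'b^'n)"
    using assms by (auto simp: linear_iff vec_eq_iff linear_simps)
  moreover have "\<exists>K. \<forall>x. norm ((\<chi> a. f a x) :: 'b^'n) \<le> norm x * K"
  proof -
    have "\<forall>a. \<exists>K. \<forall>x. norm (f a x) \<le> norm x * K"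
      using assms bounded_linear.bounded by blast
    then obtain K where K: "\<And>a x. norm (f a x) \<le> norm x * K a" by metis
    have "norm ((\<chi> a. f a x) :: 'b^'n) \<le> norm x * (\<Sum>a\<in>UNIV. K a)" for x
    proof -
      have "norm ((\<chi> a. f a x) :: 'b^'n) \<le> (\<Sum>a\<in>UNIV. norm (f a x))"
        unfolding norm_vec_def by (rule order_trans[OF L2_set_le_sum]) auto
      also have "\<dots> \<le> (\<Sum>a\<in>UNIV. norm x * K a)" by (intro sum_mono K)
      finally show ?thesis by (simp add: sum_distrib_left)
    qed
    thus ?thesis by blast
  qed
  ultimately show ?thesis
    by (auto simp: bounded_linear_def bounded_linear_axioms_def linear_conv_bounded_linear)
qed

lemma bcl_vec_lambda:
  "(\<And>a. bounded_clinear (f a)) \<Longrightarrow> bounded_clinear (\<lambda>x. (\<chi> a. f a x) :: 'b::chilbert^'n)"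
  unfolding bounded_clinear_def
  by (auto intro!: bounded_linear_vec_lambda simp: scaleC_vec_def)

lemma bcl_linear:
  assumes "bounded_clinear f"
  shows "f (x + y) = f x + f y" "f (c *\<^sub>C x) = c *\<^sub>C f x" "f 0 = 0" "f (x - y) = f x - f y"
    "f (\<Sum>i\<in>I. g i) = (\<Sum>i\<in>I. f (g i))" "f (r *\<^sub>R x) = r *\<^sub>R f x"
  using assms unfolding bounded_clinear_def
  by (auto simp: linear_simps bounded_linear.linear linear_sum)


lemma charsum:
  fixes T :: nat and d :: int
  assumes T: "0 < T"
  shows "(\<Sum>t<T. cis (2 * pi * real t * of_int d / real T)) = (if int T dvd d then of_nat T else 0)"
proof -
  define \<omega> where "\<omega> = cis (2 * pi * of_int d / real T)"
  have pw: "cis (2 * pi * real t * of_int d / real T) = \<omega> ^ t" for t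
    unfolding \<omega>_def by (subst Complex.DeMoivre) (simp add: field_simps)
  have wT: "\<omega> ^ T = 1"
  proof -
    have "\<omega> ^ T = cis (2 * pi * of_int d)" using T by (simp add: \<omega>_def Complex.DeMoivre field_simps)
    also have "\<dots> = 1" by (rule cis_multiple_2pi) simp
    finally show ?thesis .
  qed
  have w1: "\<omega> = 1 \<longleftrightarrow> int T dvd d"
  proof
    assume "\<omega> = 1"
    hence "exp (\<i> * complex_of_real (2 * pi * of_int d / real T)) = 1"
      by (simp add: \<omega>_def cis_conv_exp)
    then obtain j :: int where "2 * pi * of_int d / real T = of_int (2 * j) * pi"
      by (auto simp: exp_eq_1)
    hence "of_int d = real T * of_int j" using T by (simp add: field_simps)
    hence "d = int T * j" by (metis of_int_eq_iff of_int_mult of_int_of_nat_eq)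
    thus "int T dvd d" by simp
  next
    assume "int T dvd d"
    then obtain j where "d = int T * j" by auto
    hence "2 * pi * of_int d / real T = 2 * pi * of_int j" using T by simp
    thus "\<omega> = 1" unfolding \<omega>_def by (metis cis_multiple_2pi Ints_of_int)
  qed
  show ?thesis
    unfolding pw sum_gp_strict using wT w1 by auto
qed

lemma sum_split_blocks:
  fixes g :: "nat \<Rightarrow> 'a::comm_monoid_add"
  shows "(\<Sum>t<Q * L. g t) = (\<Sum>j<Q. \<Sum>t<L. g (t + j * L))"
proof -
  have "(\<Sum>t<Q * L. g t) = (\<Sum>j<Q. sum g {j * L..<j * L + L})"
    using sum.nat_group[of g L Q] by simp
  also have "\<dots> = (\<Sum>j<Q. \<Sum>t<L. g (t + j * L))"
  proof (rule sum.cong[OF refl])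
    fix j
    show "sum g {j * L..<j * L + L} = (\<Sum>t<L. g (t + j * L))"
      using sum.shift_bounds_nat_ivl[of g 0 "j*L" L] by (simp add: atLeast0LessThan add.commute)
  qed
  finally show ?thesis .
qed

lemma periodic_mult: "(\<And>t::nat. F (t + L) = F t) \<Longrightarrow> F (t + (j::nat) * L) = F t"
  by (induction j) (simp_all, metis add.commute add.left_commute)

lemma cis_shift: "cis (a + 2 * pi * of_int N) = cis a"
  by (simp flip: cis_mult)

lemma fourier_cong_mod:
  assumes "0 < T" "k mod int T = k' mod int T"
  shows "fourier T F k = fourier T F k'"
proof -
  obtain j where kj: "k = k' + int T * j"
    using assms(2) by (metis mod_eqE mult.commute add.commute dvd_def eq_diff_eq)
  have "cis (- 2 * pi * real t * real_of_int k / real T) = cis (- 2 * pi * real t * real_of_int k' / real T)" for t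
  proof -
    have "- 2 * pi * real t * real_of_int k / real T = - 2 * pi * real t * real_of_int k' / real T + 2 * pi * real_of_int (- int t * j)"
      using assms(1) by (simp add: kj field_simps)
    thus ?thesis by (simp only: cis_shift)
  qed
  thus ?thesis unfolding fourier_def by (intro ext) simp
qed

lemma fourier_block:
  assumes L: "0 < L" and Q: "0 < Q"
  shows "fourier (Q * L) F k x = (1 / real (Q * L)) *\<^sub>R
     (\<Sum>t<L. cis (- 2 * pi * real t * real_of_int k / real (Q * L)) *\<^sub>C
        (\<Sum>j<Q. cis (- 2 * pi * real j * real_of_int k / real Q) *\<^sub>C F (t + j * L) x))"
proof -
  have c: "cis (- 2 * pi * real (t + j * L) * real_of_int k / real (Q * L))
      = cis (- 2 * pi * real t * real_of_int k / real (Q * L)) * cis (- 2 * pi * real j * real_of_int k / real Q)"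
    for t j
    unfolding cis_mult using L Q by (rule_tac arg_cong[where f=cis]) (simp add: field_simps)
  show ?thesis
    unfolding fourier_def sum_split_blocks[where Q=Q and L=L]
    by (subst sum.swap) (simp only: c scaleC_sum_right scaleC_scaleC)
qed

lemma fourier_periodic_zero:
  assumes L: "0 < L" and Q: "0 < Q" and per: "\<And>t. F (t + L) = F t" and nd: "\<not> int Q dvd k"
  shows "fourier (Q * L) F k x = 0"
proof -
  have "(\<Sum>j<Q. cis (- 2 * pi * real j * real_of_int k / real Q) *\<^sub>C F (t + j * L) x) = 0" for t
  proof -
    have "(\<Sum>j<Q. cis (- 2 * pi * real j * real_of_int k / real Q) *\<^sub>C F (t + j * L) x)
        = (\<Sum>j<Q. cis (2 * pi * real j * real_of_int (- k) / real Q)) *\<^sub>C F t x"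
      by (simp add: periodic_mult[where F=F, OF per] scaleC_sum_left)
    also have "\<dots> = 0" using charsum[OF Q, of "-k"] nd by simp
    finally show ?thesis .
  qed
  thus ?thesis by (simp add: fourier_block[OF L Q])
qed

lemma fourier_dvd:
  assumes L: "0 < L" and Q: "0 < Q" and d: "int Q dvd k"
  shows "fourier (Q * L) F k x = (1 / real (Q * L)) *\<^sub>R
     (\<Sum>t<L. cis (- 2 * pi * real t * real_of_int k / real (Q * L)) *\<^sub>C (\<Sum>j<Q. F (t + j * L) x))"
proof -
  obtain k' where k: "k = int Q * k'" using d by auto
  have "cis (- 2 * pi * real j * real_of_int k / real Q) = 1" for j
  proof -
    have "- 2 * pi * real j * real_of_int k / real Q = 2 * pi * real_of_int (- int j * k')"
      using Q by (simp add: k field_simps)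
    thus ?thesis by (metis cis_multiple_2pi Ints_of_int)
  qed
  thus ?thesis by (simp add: fourier_block[OF L Q])
qed

lemma idx_decomp:
  fixes L Q :: nat and k N :: int
  assumes L: "0 < L" and Q: "0 < Q" and d: "int Q dvd k" and N: "N = int Q * int L"
  shows "nat ((k mod N) div int Q) < L" "k mod N = int Q * int (nat ((k mod N) div int Q))"
proof -
  define M where "M = k mod N"
  have M0: "0 \<le> M" "M < int Q * int L" using L Q by (auto simp: M_def N)
  have QM: "int Q dvd M" unfolding M_def using d by (simp add: dvd_mod N)
  then obtain r0 where r0: "M = int Q * r0" by auto
  have r00: "0 \<le> r0" "r0 < int L" using M0 Q by (auto simp: r0 zero_le_mult_iff)
  have "M div int Q = r0" using Q by (simp add: r0)
  thus "nat ((k mod N) div int Q) < L" "k mod N = int Q * int (nat ((k mod N) div int Q))"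
    using r00 unfolding M_def[symmetric] by (auto simp: r0)
qed

lemma synth_index:
  fixes L Q :: nat and k N :: int
  assumes L: "0 < L" and Q: "0 < Q" and d: "int Q dvd k" and r: "r < L" and N: "N = int Q * int L"
  shows "N dvd int r * int Q - k \<longleftrightarrow> r = nat ((k mod N) div int Q)"
proof -
  note D = idx_decomp[OF L Q d N]
  define r0 where "r0 = nat ((k mod N) div int Q)"
  have "N dvd int r * int Q - k \<longleftrightarrow> (int r * int Q) mod N = k mod N"
    by (simp only: mod_eq_dvd_iff)
  also have "(int r * int Q) mod N = int r * int Q"
    using r Q by (intro mod_pos_pos_trivial) (auto simp: N)
  also have "int r * int Q = k mod N \<longleftrightarrow> r = r0"
    using Q D(2) by (simp add: r0_def[symmetric] mult.commute)
  finally show ?thesis by (simp add: r0_def)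
qed

lemma fourier_synth_gen:
  fixes G :: "nat \<Rightarrow> 'a \<Rightarrow> 'b::chilbert"
  assumes L: "0 < L" and Q: "0 < Q"
  shows "fourier (Q * L) (\<lambda>t x. \<Sum>r<L. cis (2 * pi * real t * real r / real L) *\<^sub>C G r x) k x
     = (if int Q dvd k then G (nat ((k mod int (Q * L)) div int Q)) x else 0)"
proof -
  have c: "cis (- 2 * pi * real t * real_of_int k / real (Q * L)) * cis (2 * pi * real t * real r / real L)
     = cis (2 * pi * real t * real_of_int (int r * int Q - k) / real (Q * L))" for t r
    unfolding cis_mult using L Q by (rule_tac arg_cong[where f=cis]) (simp add: field_simps)
  have "fourier (Q * L) (\<lambda>t x. \<Sum>r<L. cis (2 * pi * real t * real r / real L) *\<^sub>C G r x) k x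
     = (1 / real (Q * L)) *\<^sub>R (\<Sum>r<L. (\<Sum>t<Q * L. cis (2 * pi * real t * real_of_int (int r * int Q - k) / real (Q * L))) *\<^sub>C G r x)"
    unfolding fourier_def
    by (simp only: scaleC_sum_right scaleC_scaleC c scaleC_sum_left sum.swap[where A="{..<Q*L}"])
  also have "\<dots> = (1 / real (Q * L)) *\<^sub>R (\<Sum>r<L. (if int (Q * L) dvd int r * int Q - k then of_nat (Q * L) else 0) *\<^sub>C G r x)"
  proof -
    have "(\<Sum>t<Q * L. cis (2 * pi * real t * real_of_int (int r * int Q - k) / real (Q * L)))
       = (if int (Q * L) dvd int r * int Q - k then of_nat (Q * L) else 0)" for r
      by (rule charsum) (use L Q in simp)
    thus ?thesis by (simp only:)
  qed
  also have "\<dots> = (if int Q dvd k then G (nat ((k mod int (Q * L)) div int Q)) x else 0)"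
  proof (cases "int Q dvd k")
    case True
    define r0 where "r0 = nat ((k mod int (Q * L)) div int Q)"
    have r0L: "r0 < L"
      using idx_decomp[OF L Q True, of "int (Q * L)"] by (simp add: r0_def)
    have "(\<Sum>r<L. (if int (Q * L) dvd int r * int Q - k then of_nat (Q * L) else 0) *\<^sub>C G r x)
        = (\<Sum>r<L. if r = r0 then of_nat (Q * L) *\<^sub>C G r x else 0)"
    proof (intro sum.cong refl)
      fix r assume "r \<in> {..<L}"
      hence "int (Q * L) dvd int r * int Q - k \<longleftrightarrow> r = r0"
        unfolding r0_def by (intro synth_index[OF L Q True]) auto
      thus "(if int (Q * L) dvd int r * int Q - k then of_nat (Q * L) else 0) *\<^sub>C G r x
         = (if r = r0 then of_nat (Q * L) *\<^sub>C G r x else 0)" by simp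
    qed
    also have "\<dots> = of_nat (Q * L) *\<^sub>C G r0 x" using r0L by (simp add: sum.delta)
    finally have "(\<Sum>r<L. (if int (Q * L) dvd int r * int Q - k then of_nat (Q * L) else 0) *\<^sub>C G r x)
       = of_nat (Q * L) *\<^sub>C G r0 x" .
    moreover have "(1 / real (Q * L)) *\<^sub>R (of_nat (Q * L) *\<^sub>C G r0 x) = G r0 x"
      using L Q by (simp only: scaleR_scaleC) simp
    ultimately show ?thesis using True by (simp only: r0_def if_True)
  next
    case False
    have "int (Q * L) dvd int r * int Q - k \<Longrightarrow> False" for r
      proof -
      assume "int (Q * L) dvd int r * int Q - k"
      hence "int Q dvd int r * int Q - k" by (rule dvd_trans[rotated]) simp
      hence "int Q dvd k" using dvd_diff[OF dvd_triv_right[of "int Q" "int r"], of "int r * int Q - k"] by simp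
      thus False using False by simp
    qed
    hence "(\<Sum>r<L. (if int (Q * L) dvd int r * int Q - k then of_nat (Q * L) else 0) *\<^sub>C G r x) = 0"
      by (intro sum.neutral) auto
    thus ?thesis using False by simp
  qed
  finally show ?thesis .
qed


lemma cis_inv_scaleC: "cis a *\<^sub>C (cis (- a) *\<^sub>C (x::'a::chilbert)) = x"
  by (simp add: scaleC_scaleC cis_mult)

lemma cis_inv_scaleC': "cis (- a) *\<^sub>C (cis a *\<^sub>C (x::'a::chilbert)) = x"
  by (simp add: scaleC_scaleC cis_mult)

lemma toep_bcl: "(\<And>t. bounded_clinear (A t)) \<Longrightarrow> bounded_clinear (toep P A r l)"
  unfolding toep_def[abs_def] by (rule bcl_fourier)

lemma fourier_bound:
  assumes P: "0 < P" and bA: "\<And>t. bounded_clinear (A t)"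
  shows "norm (fourier P A k x) \<le> (\<Sum>t<P. onorm (A t)) * norm x"
proof -
  have bl: "bounded_linear (A t)" for t using bA unfolding bounded_clinear_def by blast
  have "norm (fourier P A k x) = (1 / real P) * norm (\<Sum>t<P. cis (- 2 * pi * real t * real_of_int k / real P) *\<^sub>C A t x)"
    unfolding fourier_def by simp
  also have "\<dots> \<le> 1 * (\<Sum>t<P. norm (A t x))"
  proof (rule mult_mono)
    show "1 / real P \<le> 1" using P by simp
    show "norm (\<Sum>t<P. cis (- 2 * pi * real t * real_of_int k / real P) *\<^sub>C A t x) \<le> (\<Sum>t<P. norm (A t x))"
      by (rule order_trans[OF norm_sum]) simp
  qed (auto intro: sum_nonneg)
  also have "\<dots> \<le> (\<Sum>t<P. onorm (A t) * norm x)"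
    by (simp add: sum_mono onorm bl)
  finally show ?thesis by (simp add: sum_distrib_right)
qed

definition nrm :: "nat \<Rightarrow> (nat \<Rightarrow> 'a::real_normed_vector) \<Rightarrow> real" where
  "nrm P v = (\<Sum>r<P. norm (v r))"

lemma nrm_nonneg: "0 \<le> nrm P v" unfolding nrm_def by (simp add: sum_nonneg)

lemma norm_le_nrm: "r < P \<Longrightarrow> norm (v r) \<le> nrm P v"
  unfolding nrm_def by (rule member_le_sum) auto

lemma toep_sum_bound:
  assumes P: "0 < P" and bA: "\<And>t. bounded_clinear (A t)"
  shows "norm (\<Sum>l<P. toep P A r l (v l)) \<le> (\<Sum>t<P. onorm (A t)) * nrm P v"
proof -
  have "norm (\<Sum>l<P. toep P A r l (v l)) \<le> (\<Sum>l<P. norm (toep P A r l (v l)))" by (rule norm_sum)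
  also have "\<dots> \<le> (\<Sum>l<P. (\<Sum>t<P. onorm (A t)) * norm (v l))"
    unfolding toep_def by (intro sum_mono fourier_bound[OF P bA])
  finally show ?thesis by (simp add: nrm_def sum_distrib_left)
qed

lemma diff_swap_lemma: "(a::'a::ab_group_add) - b = c - e \<Longrightarrow> a - c = b - e"
  by (simp add: algebra_simps)

lemma resolv_solvable:
  fixes A :: "nat \<Rightarrow> 'x::chilbert \<Rightarrow> 'x"
  assumes P: "0 < P" and bA: "\<And>t. bounded_clinear (A t)"
  shows "\<exists>\<rho>>0. \<forall>z. cmod z < \<rho> \<longrightarrow> inj_on (resolv_op P A z) (bvecs P) \<and>
           (\<forall>b\<in>bvecs P. \<exists>w\<in>bvecs P. resolv_op P A z w = b)"
proof -
  define K where "K = (\<Sum>t<P. onorm (A t))"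
  have K0: "0 \<le> K" unfolding K_def
    using bA by (intro sum_nonneg onorm_pos_le) (auto simp: bounded_clinear_def)
  have bcT: "bounded_clinear (toep P A r l)" for r l by (rule toep_bcl[OF bA])
  note lin = bcl_linear[OF bcT]
  have blT: "bounded_linear (toep P A r l)" for r l using bcT unfolding bounded_clinear_def by blast
  define \<rho> where "\<rho> = 1 / (real P * K + 1)"
  have PK0: "0 \<le> real P * K" using K0 by simp
  have \<rho>0: "\<rho> > 0" using PK0 by (simp add: \<rho>_def add_nonneg_pos)
  have main: "inj_on (resolv_op P A z) (bvecs P) \<and> (\<forall>b\<in>bvecs P. \<exists>w\<in>bvecs P. resolv_op P A z w = b)"
    if z: "cmod z < \<rho>" for z
  proof -
    define \<theta> where "\<theta> = cmod z * real P * K"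
    have \<theta>1: "\<theta> < 1"
    proof -
      have "cmod z * (real P * K + 1) < 1"
        using z PK0 by (simp add: \<rho>_def pos_less_divide_eq add_nonneg_pos)
      thus ?thesis unfolding \<theta>_def using K0 by (simp add: algebra_simps) (smt (verit) norm_ge_zero)
    qed
    have \<theta>0: "0 \<le> \<theta>" unfolding \<theta>_def using K0 by simp
    have est: "nrm P (\<lambda>r. if r < P then c r *\<^sub>C (z *\<^sub>C (\<Sum>l<P. toep P A r l (v l))) else 0) \<le> \<theta> * nrm P v"
      if c: "\<And>r. cmod (c r) = 1" for c v
    proof -
      have "nrm P (\<lambda>r. if r < P then c r *\<^sub>C (z *\<^sub>C (\<Sum>l<P. toep P A r l (v l))) else 0)
          = (\<Sum>r<P. cmod z * norm (\<Sum>l<P. toep P A r l (v l)))"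
        unfolding nrm_def using c by (intro sum.cong) auto
      also have "\<dots> \<le> (\<Sum>r<P. cmod z * (K * nrm P v))"
        unfolding K_def by (intro sum_mono mult_left_mono toep_sum_bound[OF P bA]) auto
      finally show ?thesis by (simp add: \<theta>_def mult_ac)
    qed
    have inj: "inj_on (resolv_op P A z) (bvecs P)"
    proof (rule inj_onI)
      fix w1 w2 assume w1: "w1 \<in> bvecs P" and w2: "w2 \<in> bvecs P"
        and eq: "resolv_op P A z w1 = resolv_op P A z w2"
      define d where "d = (\<lambda>r. w1 r - w2 r)"
      have dr: "d r = (if r < P then cis (- 2 * pi * real r / real P) *\<^sub>C (z *\<^sub>C (\<Sum>l<P. toep P A r l (d l))) else 0)" for r
      proof (cases "r < P")
        case True
        have "cis (2 * pi * real r / real P) *\<^sub>C w1 r - z *\<^sub>C (\<Sum>l<P. toep P A r l (w1 l))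
            = cis (2 * pi * real r / real P) *\<^sub>C w2 r - z *\<^sub>C (\<Sum>l<P. toep P A r l (w2 l))"
          using fun_cong[OF eq, of r] True by (simp add: resolv_op_def)
        hence "cis (2 * pi * real r / real P) *\<^sub>C w1 r - cis (2 * pi * real r / real P) *\<^sub>C w2 r
            = z *\<^sub>C (\<Sum>l<P. toep P A r l (w1 l)) - z *\<^sub>C (\<Sum>l<P. toep P A r l (w2 l))"
          by (rule diff_swap_lemma)
        moreover have "(\<Sum>l<P. toep P A r l (d l)) = (\<Sum>l<P. toep P A r l (w1 l)) - (\<Sum>l<P. toep P A r l (w2 l))"
          by (simp add: d_def lin(4) sum_subtractf)
        ultimately have "cis (2 * pi * real r / real P) *\<^sub>C d r = z *\<^sub>C (\<Sum>l<P. toep P A r l (d l))"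
          by (simp only: d_def scaleC_diff_right)
        hence "cis (- (2 * pi * real r / real P)) *\<^sub>C (cis (2 * pi * real r / real P) *\<^sub>C d r)
           = cis (- (2 * pi * real r / real P)) *\<^sub>C (z *\<^sub>C (\<Sum>l<P. toep P A r l (d l)))" by simp
        thus ?thesis using True by (simp only: cis_inv_scaleC') simp
      next
        case False thus ?thesis using w1 w2 by (simp add: d_def bvecs_def)
      qed
      have "nrm P d \<le> \<theta> * nrm P d"
        by (subst dr[abs_def]) (rule est, simp)
      hence "(1 - \<theta>) * nrm P d \<le> 0" by (simp add: algebra_simps)
      hence "nrm P d \<le> 0" using \<theta>1 by (simp add: mult_le_0_iff)
      hence "norm (d r) = 0" if "r < P" for r using norm_le_nrm[OF that, of d] norm_ge_zero[of "d r"] by linarith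
      hence "d r = 0" for r using w1 w2 by (cases "r < P") (auto simp: d_def bvecs_def)
      thus "w1 = w2" by (auto simp: d_def fun_eq_iff)
    qed
    have surj: "\<exists>w\<in>bvecs P. resolv_op P A z w = b" if b: "b \<in> bvecs P" for b
    proof -
      define e where "e r = cis (- 2 * pi * real r / real P)" for r
      have e1: "cmod (e r) = 1" for r by (simp add: e_def)
      define step where "step vk = (\<lambda>r. if r < P then e r *\<^sub>C (\<Sum>l<P. toep P A r l (vk l)) else 0)" for vk :: "nat \<Rightarrow> 'x"
      define v where "v = rec_nat (\<lambda>r. if r < P then e r *\<^sub>C b r else 0) (\<lambda>k vk. step vk)"
      have v0: "v 0 = (\<lambda>r. if r < P then e r *\<^sub>C b r else 0)" by (simp add: v_def)
      have vS: "v (Suc k) = step (v k)" for k by (simp add: v_def)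
      have vout: "v k r = 0" if "\<not> r < P" for k r
        using that by (cases k) (simp_all add: v0 vS step_def)
      have nb: "nrm P (v k) \<le> (real P * K) ^ k * nrm P b" for k
      proof (induction k)
        case 0 show ?case by (simp add: v0 nrm_def e1)
      next
        case (Suc k)
        have "nrm P (v (Suc k)) = (\<Sum>r<P. norm (\<Sum>l<P. toep P A r l (v k l)))"
          by (simp add: vS step_def nrm_def e1)
        also have "\<dots> \<le> (\<Sum>r<P. K * nrm P (v k))"
          unfolding K_def by (intro sum_mono toep_sum_bound[OF P bA])
        also have "\<dots> = real P * K * nrm P (v k)" by simp
        also have "\<dots> \<le> real P * K * ((real P * K) ^ k * nrm P b)"
          using Suc K0 by (intro mult_left_mono) auto
        finally show ?case by simp
      qed
      have tb: "norm (z ^ k *\<^sub>C v k r) \<le> \<theta> ^ k * nrm P b" for k r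
      proof (cases "r < P")
        case True
        have "norm (z ^ k *\<^sub>C v k r) = cmod z ^ k * norm (v k r)" by (simp add: norm_power)
        also have "\<dots> \<le> cmod z ^ k * ((real P * K) ^ k * nrm P b)"
          by (intro mult_left_mono order_trans[OF norm_le_nrm[OF True] nb]) auto
        finally show ?thesis by (simp add: \<theta>_def power_mult_distrib mult_ac)
      next
        case False thus ?thesis using vout[OF False] by (simp add: nrm_nonneg \<theta>0)
      qed
      have sg: "summable (\<lambda>k. \<theta> ^ k * nrm P b)"
        using \<theta>0 \<theta>1 by (intro summable_mult2 summable_geometric) simp
      have sm: "summable (\<lambda>k. z ^ k *\<^sub>C v k r)" for r
        by (rule summable_comparison_test'[OF sg, where N=0]) (rule tb)
      define w where "w r = (\<Sum>k. z ^ k *\<^sub>C v k r)" for r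
      have wb: "w \<in> bvecs P" by (simp add: bvecs_def w_def vout)
      have "resolv_op P A z w r = b r" for r
      proof (cases "r < P")
        case False thus ?thesis using b by (simp add: resolv_op_def bvecs_def)
      next
        case True
        define c where "c = cis (2 * pi * real r / real P)"
        have ce: "c *\<^sub>C (e r *\<^sub>C x) = x" for x :: 'x
          unfolding c_def e_def using cis_inv_scaleC[of "2 * pi * real r / real P" x] by simp
        define S where "S k = (\<Sum>l<P. toep P A r l (v k l))" for k
        have vSr: "c *\<^sub>C v (Suc k) r = S k" for k by (simp add: vS step_def True ce S_def)
        have smS: "summable (\<lambda>k. z ^ k *\<^sub>C S k)"
        proof (rule summable_comparison_test'[where N=0])
          show "summable (\<lambda>k. K * (\<theta> ^ k * nrm P b))" using sg by (rule summable_mult)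
          fix k
          have "norm (z ^ k *\<^sub>C S k) = cmod z ^ k * norm (S k)" by (simp add: norm_power)
          also have "\<dots> \<le> cmod z ^ k * (K * nrm P (v k))"
            unfolding S_def K_def by (intro mult_left_mono toep_sum_bound[OF P bA]) auto
          also have "\<dots> \<le> cmod z ^ k * (K * ((real P * K) ^ k * nrm P b))"
            by (intro mult_left_mono nb K0) auto
          also have "\<dots> = K * (\<theta> ^ k * nrm P b)" by (simp add: \<theta>_def power_mult_distrib mult_ac)
          finally show "norm (z ^ k *\<^sub>C S k) \<le> K * (\<theta> ^ k * nrm P b)" .
        qed
        have A1: "(\<Sum>l<P. toep P A r l (w l)) = (\<Sum>k. z ^ k *\<^sub>C S k)"
        proof -
          have "(\<Sum>l<P. toep P A r l (w l)) = (\<Sum>l<P. \<Sum>k. z ^ k *\<^sub>C toep P A r l (v k l))"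
            unfolding w_def by (intro sum.cong refl) (simp add: bounded_linear.suminf[OF blT sm] lin)
          also have "\<dots> = (\<Sum>k. \<Sum>l<P. z ^ k *\<^sub>C toep P A r l (v k l))"
          proof (rule suminf_sum[symmetric])
            fix l
            show "summable (\<lambda>k. z ^ k *\<^sub>C toep P A r l (v k l))"
              using bounded_linear.summable[OF blT sm[of l], of r l] by (simp add: lin)
          qed
          finally show ?thesis by (simp add: S_def scaleC_sum_right)
        qed
        have A2: "z *\<^sub>C (\<Sum>k. z ^ k *\<^sub>C S k) = (\<Sum>k. z ^ Suc k *\<^sub>C S k)"
          by (simp add: bounded_linear.suminf[OF bounded_linear_scaleC smS] scaleC_scaleC)
        have A3: "c *\<^sub>C w r = b r + (\<Sum>k. z ^ Suc k *\<^sub>C S k)"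
        proof -
          define f where "f k = z ^ k *\<^sub>C (c *\<^sub>C v k r)" for k
          have "c *\<^sub>C w r = (\<Sum>k. f k)"
            unfolding w_def f_def
            by (simp add: bounded_linear.suminf[OF bounded_linear_scaleC sm] scaleC_scaleC mult.commute)
          moreover have smf: "summable f"
            unfolding f_def using bounded_linear.summable[OF bounded_linear_scaleC sm[of r], of c]
            by (simp add: scaleC_scaleC mult.commute)
          moreover have "f 0 = b r" by (simp add: f_def v0 True ce)
          moreover have "f (Suc k) = z ^ Suc k *\<^sub>C S k" for k by (simp add: f_def vSr)
          ultimately show ?thesis using suminf_split_head[OF smf] by (simp add: algebra_simps)
        qed
        show ?thesis using True by (simp add: resolv_op_def A1 A2 A3 c_def[symmetric])
      qed
      thus ?thesis using wb by blast
    qed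
    show ?thesis using inj surj by blast
  qed
  show ?thesis using \<rho>0 main by blast
qed


lemma ps_small_bound:
  fixes h :: "nat \<Rightarrow> 'a::chilbert"
  assumes r0: "0 < r0" and M: "\<And>j. r0 ^ j * norm (h j) \<le> M"
    and t: "0 < t" "t \<le> r0 / 2"
    and sm: "(\<lambda>j. complex_of_real t ^ j *\<^sub>C h (j + k)) sums 0"
  shows "norm (h k) \<le> 2 * M / r0 ^ Suc k * t"
proof -
  define f where "f j = complex_of_real t ^ j *\<^sub>C h (j + k)" for j
  have f0: "f 0 = h k" by (simp add: f_def)
  have "(\<lambda>j. f (Suc j)) sums (- h k)" using sm unfolding f_def[symmetric] sums_Suc_iff f0 by simp
  hence hk: "- h k = (\<Sum>j. f (Suc j))" by (rule sums_unique)
  define g where "g j = M / r0 ^ k * (t / r0) * (t / r0) ^ j" for j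
  have tr: "0 < t / r0" "t / r0 \<le> 1/2" using t r0 by (auto simp: field_simps)
  have M0: "0 \<le> M" using M[of 0] norm_ge_zero[of "h 0"] by (simp del: norm_ge_zero)
  have bnd: "norm (f (Suc j)) \<le> g j" for j
  proof -
    have "norm (f (Suc j)) = t ^ Suc j * norm (h (Suc j + k))"
      using t by (simp add: f_def norm_power norm_mult del: power_Suc)
    also have "\<dots> = (t / r0) ^ Suc j / r0 ^ k * (r0 ^ (Suc j + k) * norm (h (Suc j + k)))"
      using r0 by (simp add: field_simps power_add)
    also have "\<dots> \<le> (t / r0) ^ Suc j / r0 ^ k * M"
      using tr r0 t by (intro mult_left_mono M) (auto intro!: divide_nonneg_pos)
    finally show ?thesis by (simp add: g_def field_simps)
  qed
  have tr1: "norm (t / r0) < 1" using tr t r0 by (simp add: abs_of_pos)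
  have sg: "summable g" unfolding g_def using tr1 by (intro summable_mult summable_geometric)
  have "suminf g = M / r0 ^ k * (t / r0) * (1 / (1 - t / r0))"
    unfolding g_def using tr1 by (subst suminf_mult) (auto simp: suminf_geometric summable_geometric)
  also have "\<dots> \<le> M / r0 ^ k * (t / r0) * 2"
    using tr M0 r0 by (intro mult_left_mono) (auto simp: field_simps)
  finally have "suminf g \<le> 2 * M / r0 ^ Suc k * t" by (simp add: field_simps)
  moreover have "norm (h k) \<le> suminf g"
    using norm_suminf_le[OF bnd sg] hk by (metis norm_minus_cancel)
  ultimately show ?thesis by linarith
qed

lemma ps_unique0:
  fixes h :: "nat \<Rightarrow> 'a::chilbert"
  assumes \<rho>: "0 < \<rho>" and S: "\<And>z. cmod z < \<rho> \<Longrightarrow> (\<lambda>k. z ^ k *\<^sub>C h k) sums 0"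
  shows "h k = 0"
proof (induction k rule: less_induct)
  case (less k)
  define r0 where "r0 = \<rho> / 2"
  have r0: "0 < r0" "r0 < \<rho>" using \<rho> by (auto simp: r0_def)
  have "summable (\<lambda>j. complex_of_real r0 ^ j *\<^sub>C h j)"
    using S[of "complex_of_real r0"] r0 by (auto intro: sums_summable)
  hence "(\<lambda>j. complex_of_real r0 ^ j *\<^sub>C h j) \<longlonglongrightarrow> 0" by (rule summable_LIMSEQ_zero)
  hence "Bseq (\<lambda>j. complex_of_real r0 ^ j *\<^sub>C h j)" by (intro convergent_imp_Bseq convergentI)
  then obtain M where M: "\<And>j. norm (complex_of_real r0 ^ j *\<^sub>C h j) \<le> M"
    unfolding Bseq_def by blast
  have M': "r0 ^ j * norm (h j) \<le> M" for j using M[of j] r0 by (simp add: norm_power)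
  define C where "C = 2 * M / r0 ^ Suc k"
  have hb: "norm (h k) \<le> C * t" if t: "0 < t" "t \<le> r0 / 2" for t
  proof -
    have z: "cmod (complex_of_real t) < \<rho>" using t r0 by simp
    have "(\<lambda>j. complex_of_real t ^ (j + k) *\<^sub>C h (j + k)) sums (0 - (\<Sum>i<k. complex_of_real t ^ i *\<^sub>C h i))"
      by (rule sums_split_initial_segment[OF S[OF z]])
    also have "(\<Sum>i<k. complex_of_real t ^ i *\<^sub>C h i) = 0" using less by simp
    finally have "(\<lambda>j. complex_of_real t ^ (j + k) *\<^sub>C h (j + k)) sums 0" by simp
    hence "(\<lambda>j. (1 / complex_of_real t ^ k) *\<^sub>C (complex_of_real t ^ (j + k) *\<^sub>C h (j + k))) sums ((1 / complex_of_real t ^ k) *\<^sub>C 0)"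
      by (rule bounded_linear.sums[OF bounded_linear_scaleC])
    hence "(\<lambda>j. complex_of_real t ^ j *\<^sub>C h (j + k)) sums 0"
      using t by (simp add: scaleC_scaleC power_add)
    thus ?thesis unfolding C_def by (rule ps_small_bound[OF r0(1) M' t])
  qed
  show "h k = 0"
  proof (rule ccontr)
    assume "h k \<noteq> 0"
    hence nk: "norm (h k) > 0" by simp
    have C0: "0 \<le> C" using hb[of "r0/2"] r0 nk by (smt (verit) divide_pos_pos mult_le_0_iff)
    show False
    proof (cases "C = 0")
      case True thus False using hb[of "r0/2"] r0 nk by simp
    next
      case False
      define t where "t = min (r0 / 2) (norm (h k) / (2 * C))"
      have t: "0 < t" "t \<le> r0 / 2" using r0 nk C0 False by (auto simp: t_def)
      have "C * t \<le> C * (norm (h k) / (2 * C))" using C0 by (intro mult_left_mono) (auto simp: t_def)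
      also have "\<dots> = norm (h k) / 2" using False by simp
      finally show False using hb[OF t] nk by linarith
    qed
  qed
qed

lemma htf_coeff_cong:
  assumes "0 < \<rho>0" and "\<And>z u. cmod z < \<rho>0 \<Longrightarrow> htf_entry M N A B C D i z u = htf_entry M N A' B' C' D' i z u"
  shows "htf_coeff M N A B C D i = htf_coeff M N A' B' C' D' i"
  unfolding htf_coeff_def
proof (rule arg_cong[where f=The], rule ext, rule iffI)
  fix h
  assume "\<exists>\<rho>>0. \<forall>z. cmod z < \<rho> \<longrightarrow> (\<forall>u. (\<lambda>k. z ^ k *\<^sub>C h k u) sums htf_entry M N A B C D i z u)"
  then obtain \<rho> where "\<rho> > 0" "\<forall>z. cmod z < \<rho> \<longrightarrow> (\<forall>u. (\<lambda>k. z ^ k *\<^sub>C h k u) sums htf_entry M N A B C D i z u)" by blast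
  thus "\<exists>\<rho>>0. \<forall>z. cmod z < \<rho> \<longrightarrow> (\<forall>u. (\<lambda>k. z ^ k *\<^sub>C h k u) sums htf_entry M N A' B' C' D' i z u)"
    using assms by (intro exI[of _ "min \<rho> \<rho>0"]) auto
next
  fix h
  assume "\<exists>\<rho>>0. \<forall>z. cmod z < \<rho> \<longrightarrow> (\<forall>u. (\<lambda>k. z ^ k *\<^sub>C h k u) sums htf_entry M N A' B' C' D' i z u)"
  then obtain \<rho> where "\<rho> > 0" "\<forall>z. cmod z < \<rho> \<longrightarrow> (\<forall>u. (\<lambda>k. z ^ k *\<^sub>C h k u) sums htf_entry M N A' B' C' D' i z u)" by blast
  thus "\<exists>\<rho>>0. \<forall>z. cmod z < \<rho> \<longrightarrow> (\<forall>u. (\<lambda>k. z ^ k *\<^sub>C h k u) sums htf_entry M N A B C D i z u)"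
    using assms by (intro exI[of _ "min \<rho> \<rho>0"]) auto
qed

lemma htf_coeff_zero:
  assumes "0 < \<rho>0" and "\<And>z u. cmod z < \<rho>0 \<Longrightarrow> htf_entry M N A B C D i z u = 0"
  shows "htf_coeff M N A B C D i = (\<lambda>k u. 0)"
  unfolding htf_coeff_def
proof (rule the_equality)
  show "\<exists>\<rho>>0. \<forall>z. cmod z < \<rho> \<longrightarrow> (\<forall>u. (\<lambda>k. z ^ k *\<^sub>C (\<lambda>k u. 0) k u) sums htf_entry M N A B C D i z u)"
    using assms by (intro exI[of _ \<rho>0]) auto
next
  fix h
  assume "\<exists>\<rho>>0. \<forall>z. cmod z < \<rho> \<longrightarrow> (\<forall>u. (\<lambda>k. z ^ k *\<^sub>C h k u) sums htf_entry M N A B C D i z u)"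
  then obtain \<rho> where \<rho>: "\<rho> > 0" "\<forall>z. cmod z < \<rho> \<longrightarrow> (\<forall>u. (\<lambda>k. z ^ k *\<^sub>C h k u) sums htf_entry M N A B C D i z u)" by blast
  have "h k u = 0" for k u
  proof (rule ps_unique0[of "min \<rho> \<rho>0"])
    show "0 < min \<rho> \<rho>0" using \<rho> assms by simp
    fix z :: complex assume "cmod z < min \<rho> \<rho>0"
    hence "cmod z < \<rho>" "cmod z < \<rho>0" by auto
    thus "(\<lambda>k. z ^ k *\<^sub>C h k u) sums 0" using \<rho>(2) assms(2)[of z u] by metis
  qed
  thus "h = (\<lambda>k u. 0)" by (auto simp: fun_eq_iff)
qed


lemma per_facts:
  assumes q: "0 < q" "q dvd m" "q dvd n" and mn: "0 < m" "0 < n"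
  shows "T0 m n = q * T1 m n q" "0 < T1 m n q" "T1 m n q = period (m div q) (n div q)"
    "m dvd T0 m n" "n dvd T0 m n"
    "err_M m n (m div q) (n div q) = m" "err_N m n (m div q) (n div q) = n"
proof -
  obtain m1 where m1: "m = q * m1" using q by auto
  obtain n1 where n1: "n = q * n1" using q by auto
  have m10: "0 < m1" "0 < n1" using mn m1 n1 by auto
  define g1 where "g1 = gcd m1 n1"
  have g1: "0 < g1" "g1 dvd n1" "g1 dvd m1" using m10 by (auto simp: g1_def)
  have g: "gcd m n = q * g1" by (simp add: m1 n1 g1_def gcd_mult_distrib_nat)
  have nd: "n div gcd m n = n1 div g1" unfolding g using q by (simp add: n1)
  have T0: "T0 m n = q * (m1 * (n1 div g1))"
    unfolding T0_def period_def nbar_def nd by (simp add: m1)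
  show T0q: "T0 m n = q * T1 m n q" using q by (simp add: T1_def T0)
  have T1: "T1 m n q = m1 * (n1 div g1)" using q by (simp add: T1_def T0)
  have "0 < n1 div g1" using g1 m10 by (simp add: dvd_imp_le div_greater_zero_iff)
  thus "0 < T1 m n q" using m10 by (simp add: T1)
  show "T1 m n q = period (m div q) (n div q)"
    unfolding T1 using q by (simp add: period_def nbar_def m1 n1 g1_def)
  show "m dvd T0 m n" by (simp add: T0_def period_def)
  have "T0 m n = (m div gcd m n) * n"
    unfolding T0_def period_def nbar_def
    by (metis dvd_div_mult dvd_div_mult_self gcd_dvd1 gcd_dvd2 mult.commute)
  thus "n dvd T0 m n" by simp
  have gd: "gcd (m div q) (n div q) dvd gcd m n"
    using q by (simp add: m1 n1 g g1_def)
  have l: "lcm (gcd m n) (gcd (m div q) (n div q)) = gcd m n"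
    using gd by simp
  show "err_M m n (m div q) (n div q) = m"
    by (simp add: err_M_def l mbar_def)
  show "err_N m n (m div q) (n div q) = n"
    by (simp add: err_N_def l nbar_def)
qed

lemma ix_bij: "bij_betw (ix :: 'q::finite \<Rightarrow> nat) UNIV {..<CARD('q)}"
proof -
  have "\<exists>f. bij_betw f (UNIV :: 'q set) {..<CARD('q)}"
    using ex_bij_betw_finite_nat[of "UNIV :: 'q set"] by (simp add: atLeast0LessThan)
  thus ?thesis unfolding ix_def by (rule someI_ex)
qed

lemma ix_less: "ix (a :: 'q::finite) < CARD('q)"
  using ix_bij[where 'q='q] by (auto simp: bij_betw_def)

lemma ix_inj: "ix (a :: 'q::finite) = ix b \<longleftrightarrow> a = b"
  using ix_bij[where 'q='q] by (auto simp: bij_betw_def inj_on_def)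

lemma sum_dvd_blocks:
  fixes H :: "nat \<Rightarrow> 'a::comm_monoid_add"
  assumes Q: "0 < Q"
  shows "(\<Sum>l<Q * L. if Q dvd l then H l else 0) = (\<Sum>k<L. H (k * Q))"
proof -
  have "(\<Sum>l<Q * L. if Q dvd l then H l else 0) = (\<Sum>k<L. \<Sum>j<Q. if Q dvd (j + k * Q) then H (j + k * Q) else 0)"
    using sum_split_blocks[of "\<lambda>l. if Q dvd l then H l else 0" L Q] by (simp add: mult.commute)
  also have "\<dots> = (\<Sum>k<L. \<Sum>j<Q. if j = 0 then H (k * Q) else 0)"
  proof (intro sum.cong refl)
    fix k j assume "j \<in> {..<Q}"
    hence "Q dvd (j + k * Q) \<longleftrightarrow> j = 0" by (auto simp: dvd_add_left_iff[symmetric] dest: dvd_imp_le)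
    thus "(if Q dvd (j + k * Q) then H (j + k * Q) else 0) = (if j = 0 then H (k * Q) else 0)" by auto
  qed
  also have "\<dots> = (\<Sum>k<L. H (k * Q))" using Q by simp
  finally show ?thesis .
qed

lemma sum_blocks_ix:
  fixes G :: "nat \<Rightarrow> 'a::comm_monoid_add"
  assumes Q: "CARD('q::finite) = Q"
  shows "(\<Sum>l<Q * L. if Q dvd l then (\<Sum>b\<in>(UNIV::'q set). G (l + ix b)) else 0) = (\<Sum>t<Q * L. G t)"
proof -
  have Q0: "0 < Q" using Q finite_UNIV_card_ge_0[where 'a='q] by simp
  have "(\<Sum>l<Q * L. if Q dvd l then (\<Sum>b\<in>(UNIV::'q set). G (l + ix b)) else 0)
      = (\<Sum>k<L. \<Sum>b\<in>(UNIV::'q set). G (k * Q + ix b))" by (rule sum_dvd_blocks[OF Q0])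
  also have "\<dots> = (\<Sum>k<L. \<Sum>j<Q. G (k * Q + j))"
  proof (intro sum.cong refl)
    fix k
    show "(\<Sum>b\<in>(UNIV::'q set). G (k * Q + ix b)) = (\<Sum>j<Q. G (k * Q + j))"
      using sum.reindex_bij_betw[OF ix_bij[where 'q='q], of "\<lambda>j. G (k * Q + j)"] Q by simp
  qed
  also have "\<dots> = (\<Sum>t<L * Q. G t)"
    using sum_split_blocks[of G L Q] by (simp add: add.commute)
  finally show ?thesis by (simp add: mult.commute)
qed


lemma fourier_pairA:
  "fourier P (\<lambda>t (x, z). (F t x, G t z)) k p = (fourier P F k (fst p), fourier P G k (snd p))"
  unfolding fourier_def by (simp add: prod_eq_iff fst_sum snd_sum scaleC_prod_def split_beta)

lemma fourier_pairB:
  "fourier P (\<lambda>t u. (F t u, G t u)) k u = (fourier P F k u, fourier P G k u)"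
  unfolding fourier_def by (simp add: prod_eq_iff fst_sum snd_sum scaleC_prod_def)

lemma fourier_diffC:
  "fourier P (\<lambda>t (x, z). F t x - G t z) k p = fourier P F k (fst p) - fourier P G k (snd p)"
  unfolding fourier_def
  by (simp add: split_beta scaleC_diff_right sum_subtractf scaleR_diff_right)

lemma fourier_diffD:
  "fourier P (\<lambda>t u. F t u - G t u) k u = fourier P F k u - fourier P G k u"
  unfolding fourier_def
  by (simp add: scaleC_diff_right sum_subtractf scaleR_diff_right)

lemma bcl_pair:
  assumes f: "bounded_clinear f" and g: "bounded_clinear g"
  shows "bounded_clinear (\<lambda>(x, z). (f x, g z))"
proof -
  have bf: "bounded_linear f" and hf: "\<And>c x. f (c *\<^sub>C x) = c *\<^sub>C f x"
    using f unfolding bounded_clinear_def by auto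
  have bg: "bounded_linear g" and hg: "\<And>c x. g (c *\<^sub>C x) = c *\<^sub>C g x"
    using g unfolding bounded_clinear_def by auto
  have b1: "bounded_linear (\<lambda>p. f (fst p))"
    using bounded_linear_compose[OF bf bounded_linear_fst] by (simp add: o_def)
  have b2: "bounded_linear (\<lambda>p. g (snd p))"
    using bounded_linear_compose[OF bg bounded_linear_snd] by (simp add: o_def)
  have eq: "(\<lambda>(x, z). (f x, g z)) = (\<lambda>p. (f (fst p), g (snd p)))" by (simp add: fun_eq_iff split_beta)
  show ?thesis unfolding bounded_clinear_def eq
  proof
    show "bounded_linear (\<lambda>p. (f (fst p), g (snd p)))" by (rule bounded_linear_Pair[OF b1 b2])
    show "\<forall>c x. (f (fst (c *\<^sub>C x)), g (snd (c *\<^sub>C x))) = c *\<^sub>C (f (fst x), g (snd x))"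
      by (simp add: scaleC_prod_def hf hg)
  qed
qed

lemma resolv_pair:
  "resolv_op P (\<lambda>t (x, z). (A t x, A' t z)) z w r
     = (resolv_op P A z (\<lambda>l. fst (w l)) r, resolv_op P A' z (\<lambda>l. snd (w l)) r)"
  unfolding resolv_op_def toep_def
  by (simp add: fourier_pairA prod_eq_iff fst_sum snd_sum scaleC_prod_def)

definition solv :: "nat \<Rightarrow> (nat \<Rightarrow> 'x::chilbert \<Rightarrow> 'x) \<Rightarrow> complex \<Rightarrow> (nat \<Rightarrow> 'x) \<Rightarrow> nat \<Rightarrow> 'x" where
  "solv P A z b = inv_into (bvecs P) (resolv_op P A z) b"

lemma solv_props:
  assumes "\<forall>b\<in>bvecs P. \<exists>w\<in>bvecs P. resolv_op P A z w = b" "b \<in> bvecs P"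
  shows "solv P A z b \<in> bvecs P" "resolv_op P A z (solv P A z b) = b"
proof -
  obtain w where "w \<in> bvecs P" "resolv_op P A z w = b" using assms by blast
  hence "b \<in> resolv_op P A z ` bvecs P" by blast
  thus "solv P A z b \<in> bvecs P" "resolv_op P A z (solv P A z b) = b"
    unfolding solv_def by (simp_all add: inv_into_into f_inv_into_f)
qed

lemma solv_unique:
  assumes "inj_on (resolv_op P A z) (bvecs P)" "w \<in> bvecs P" "resolv_op P A z w = b"
  shows "solv P A z b = w"
  unfolding solv_def using assms inv_into_f_f by fastforce

lemma bvecs_fst: "w \<in> bvecs P \<Longrightarrow> (\<lambda>l. fst (w l)) \<in> bvecs P"
  and bvecs_snd: "w \<in> bvecs P \<Longrightarrow> (\<lambda>l. snd (w l)) \<in> bvecs P"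
  by (auto simp: bvecs_def)

lemma toep_dvd_mod:
  assumes "q dvd P" "0 < P"
  shows "int q dvd ((int a - int b) mod int P) \<longleftrightarrow> int q dvd (int a - int b)"
  using assms by (simp add: dvd_mod_iff)


definition bvec :: "nat \<Rightarrow> nat \<Rightarrow> (nat \<Rightarrow> 'u::chilbert \<Rightarrow> 'x::chilbert) \<Rightarrow> 'u \<Rightarrow> nat \<Rightarrow> 'x" where
  "bvec P N B u = (\<lambda>l. if l < P then (\<Sum>s'\<in>{s'. s' < P \<and> s' mod N = 0}. toep P B l s' u) else 0)"

lemma bvec_in: "bvec P N B u \<in> bvecs P" by (simp add: bvec_def bvecs_def)

lemma err_entry:
  fixes A :: "nat \<Rightarrow> 'x::chilbert \<Rightarrow> 'x" and B :: "nat \<Rightarrow> 'u::chilbert \<Rightarrow> 'x"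
    and C :: "nat \<Rightarrow> 'x \<Rightarrow> 'y::chilbert" and D :: "nat \<Rightarrow> 'u \<Rightarrow> 'y"
    and A' :: "nat \<Rightarrow> 'w::chilbert \<Rightarrow> 'w" and B' :: "nat \<Rightarrow> 'u \<Rightarrow> 'w"
    and C' :: "nat \<Rightarrow> 'w \<Rightarrow> 'y" and D' :: "nat \<Rightarrow> 'u \<Rightarrow> 'y"
  assumes P: "0 < period M N" and bA: "\<And>t. bounded_clinear (A t)" and bA': "\<And>t. bounded_clinear (A' t)"
  shows "\<exists>\<rho>>0. \<forall>z. cmod z < \<rho> \<longrightarrow>
     inj_on (resolv_op (period M N) A z) (bvecs (period M N)) \<and>
     inj_on (resolv_op (period M N) A' z) (bvecs (period M N)) \<and>
     (\<forall>u. \<exists>w1 w2. w1 \<in> bvecs (period M N) \<and> w2 \<in> bvecs (period M N) \<and>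
        resolv_op (period M N) A z w1 = bvec (period M N) N B u \<and>
        resolv_op (period M N) A' z w2 = bvec (period M N) N B' u \<and>
        htf_entry M N (\<lambda>t (x, z). (A t x, A' t z)) (\<lambda>t u. (B t u, B' t u))
          (\<lambda>t (x, z). C t x - C' t z) (\<lambda>t u. D t u - D' t u) i z u
        = (1 / real (mbar M N)) *\<^sub>R
           (\<Sum>s\<in>{s. s < period M N \<and> s mod M = i}.
              z *\<^sub>C (\<Sum>l<period M N. toep (period M N) C s l (w1 l) - toep (period M N) C' s l (w2 l))
              + (\<Sum>s'\<in>{s'. s' < period M N \<and> s' mod N = 0}. toep (period M N) D s s' u - toep (period M N) D' s s' u)))"
proof -
  define P' where "P' = period M N"
  have bAE: "bounded_clinear ((\<lambda>t (x, z). (A t x, A' t z)) t)" for t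
    using bcl_pair[OF bA bA'] by simp
  obtain \<rho>1 where \<rho>1: "\<rho>1 > 0" "\<And>z. cmod z < \<rho>1 \<Longrightarrow> inj_on (resolv_op P' A z) (bvecs P')"
    using resolv_solvable[where A=A, OF P[folded P'_def] bA] by blast
  obtain \<rho>2 where \<rho>2: "\<rho>2 > 0" "\<And>z. cmod z < \<rho>2 \<Longrightarrow> inj_on (resolv_op P' A' z) (bvecs P')"
    using resolv_solvable[where A=A', OF P[folded P'_def] bA'] by blast
  obtain \<rho>3 where \<rho>3: "\<rho>3 > 0" "\<And>z. cmod z < \<rho>3 \<Longrightarrow>
      (\<forall>b\<in>bvecs P'. \<exists>w\<in>bvecs P'. resolv_op P' (\<lambda>t (x, z). (A t x, A' t z)) z w = b)"
    using resolv_solvable[where A="\<lambda>t (x, z). (A t x, A' t z)", OF P[folded P'_def] bAE] by blast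
  define \<rho> where "\<rho> = min \<rho>1 (min \<rho>2 \<rho>3)"
  have \<rho>0: "\<rho> > 0" using \<rho>1 \<rho>2 \<rho>3 by (simp add: \<rho>_def)
  have "\<exists>w1 w2. w1 \<in> bvecs P' \<and> w2 \<in> bvecs P' \<and>
        resolv_op P' A z w1 = bvec P' N B u \<and>
        resolv_op P' A' z w2 = bvec P' N B' u \<and>
        htf_entry M N (\<lambda>t (x, z). (A t x, A' t z)) (\<lambda>t u. (B t u, B' t u))
          (\<lambda>t (x, z). C t x - C' t z) (\<lambda>t u. D t u - D' t u) i z u
        = (1 / real (mbar M N)) *\<^sub>R
           (\<Sum>s\<in>{s. s < P' \<and> s mod M = i}.
              z *\<^sub>C (\<Sum>l<P'. toep P' C s l (w1 l) - toep P' C' s l (w2 l))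
              + (\<Sum>s'\<in>{s'. s' < P' \<and> s' mod N = 0}. toep P' D s s' u - toep P' D' s s' u))"
    if z: "cmod z < \<rho>" for z u
  proof -
    define bE where "bE = (\<lambda>l. if l < P' then (\<Sum>s'\<in>{s'. s' < P' \<and> s' mod N = 0}. toep P' (\<lambda>t u. (B t u, B' t u)) l s' u) else 0)"
    have bE: "bE = (\<lambda>l. (bvec P' N B u l, bvec P' N B' u l))"
      by (auto simp: bE_def bvec_def fun_eq_iff toep_def fourier_pairB prod_eq_iff fst_sum snd_sum)
    have bEin: "bE \<in> bvecs P'" by (simp add: bE_def bvecs_def)
    define w where "w = solv P' (\<lambda>t (x, z). (A t x, A' t z)) z bE"
    have sv: "\<forall>b\<in>bvecs P'. \<exists>w\<in>bvecs P'. resolv_op P' (\<lambda>t (x, z). (A t x, A' t z)) z w = b"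
      using \<rho>3 z by (simp add: \<rho>_def)
    have win: "w \<in> bvecs P'" and wres: "resolv_op P' (\<lambda>t (x, z). (A t x, A' t z)) z w = bE"
      using solv_props[OF sv bEin] by (simp_all add: w_def)
    define w1 where "w1 = (\<lambda>l. fst (w l))"
    define w2 where "w2 = (\<lambda>l. snd (w l))"
    have r1: "resolv_op P' A z w1 = bvec P' N B u"
      using wres unfolding w1_def by (auto simp: fun_eq_iff resolv_pair bE)
    have r2: "resolv_op P' A' z w2 = bvec P' N B' u"
      using wres unfolding w2_def by (auto simp: fun_eq_iff resolv_pair bE)
    have ent: "htf_entry M N (\<lambda>t (x, z). (A t x, A' t z)) (\<lambda>t u. (B t u, B' t u))
          (\<lambda>t (x, z). C t x - C' t z) (\<lambda>t u. D t u - D' t u) i z u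
        = (1 / real (mbar M N)) *\<^sub>R
           (\<Sum>s\<in>{s. s < P' \<and> s mod M = i}.
              z *\<^sub>C (\<Sum>l<P'. toep P' C s l (w1 l) - toep P' C' s l (w2 l))
              + (\<Sum>s'\<in>{s'. s' < P' \<and> s' mod N = 0}. toep P' D s s' u - toep P' D' s s' u))"
      unfolding htf_entry_def Let_def P'_def[symmetric] bE_def[symmetric] solv_def[symmetric] w_def[symmetric]
      by (simp add: toep_def fourier_diffC fourier_diffD w1_def w2_def)
    show ?thesis
      using bvecs_fst[OF win] bvecs_snd[OF win] r1 r2 ent unfolding w1_def w2_def by blast
  qed
  thus ?thesis using \<rho>0 \<rho>1 \<rho>2 unfolding P'_def[symmetric] \<rho>_def
    by (intro exI[of _ "min \<rho>1 (min \<rho>2 \<rho>3)"]) auto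
qed


definition phi :: "nat \<Rightarrow> nat \<Rightarrow> (nat \<Rightarrow> 'x::chilbert \<Rightarrow> 'x) \<Rightarrow> (nat \<Rightarrow> 'u::chilbert \<Rightarrow> 'x)
     \<Rightarrow> (nat \<Rightarrow> 'x \<Rightarrow> 'y::chilbert) \<Rightarrow> (nat \<Rightarrow> 'u \<Rightarrow> 'y) \<Rightarrow> nat \<Rightarrow> complex \<Rightarrow> 'u \<Rightarrow> 'y" where
  "phi M N A B C D i z u = (1 / real (mbar M N)) *\<^sub>R
     (\<Sum>s\<in>{s. s < period M N \<and> s mod M = i}.
        z *\<^sub>C (\<Sum>l<period M N. toep (period M N) C s l (solv (period M N) A z (bvec (period M N) N B u) l))
        + (\<Sum>s'\<in>{s'. s' < period M N \<and> s' mod N = 0}. toep (period M N) D s s' u))"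

lemma dvd_int_diff1: "q dvd b \<Longrightarrow> (int q dvd (int a - int b) \<longleftrightarrow> q dvd a)"
proof -
  assume "q dvd b"
  hence b: "int q dvd int b" by simp
  show ?thesis
  proof
    assume "int q dvd int a - int b"
    hence "int q dvd (int a - int b) + int b" using b by (rule dvd_add)
    thus "q dvd a" by simp
  next
    assume "q dvd a"
    hence "int q dvd int a" by simp
    thus "int q dvd int a - int b" using b by (rule dvd_diff)
  qed
qed

lemma dvd_int_diff2: "q dvd a \<Longrightarrow> (int q dvd (int a - int b) \<longleftrightarrow> q dvd b)"
proof -
  assume "q dvd a"
  hence a: "int q dvd int a" by simp
  show ?thesis
  proof
    assume ab: "int q dvd int a - int b"
    have "int q dvd int a - (int a - int b)" by (rule dvd_diff[OF a ab])
    thus "q dvd b" by simp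
  next
    assume "q dvd b"
    hence "int q dvd int b" by simp
    thus "int q dvd int a - int b" using a by (intro dvd_diff)
  qed
qed

lemma toep_zero:
  assumes L: "0 < L" and q: "0 < q" and P: "P = q * L" and per: "\<And>t. F (t + L) = F t"
    and nd: "\<not> int q dvd (int a - int b)"
  shows "toep P F a b x = 0"
proof -
  have "\<not> int q dvd ((int a - int b) mod int (q * L))"
    using nd by (simp add: dvd_mod_iff)
  thus ?thesis unfolding toep_def P by (rule fourier_periodic_zero[where F=F, OF L q per])
qed

lemma mod_notdvd: "q dvd M \<Longrightarrow> s mod M = i \<Longrightarrow> \<not> q dvd i \<Longrightarrow> \<not> q dvd (s::nat)"
  by (metis dvd_mod)

lemma mod0_dvd: "q dvd N \<Longrightarrow> s mod N = 0 \<Longrightarrow> q dvd (s::nat)"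
  by (metis dvd_trans mod_0_imp_dvd)

lemma K1:
  fixes A :: "nat \<Rightarrow> 'x::chilbert \<Rightarrow> 'x" and B :: "nat \<Rightarrow> 'u::chilbert \<Rightarrow> 'x"
    and C :: "nat \<Rightarrow> 'x \<Rightarrow> 'y::chilbert" and D :: "nat \<Rightarrow> 'u \<Rightarrow> 'y"
    and A' :: "nat \<Rightarrow> 'w::chilbert \<Rightarrow> 'w" and B' :: "nat \<Rightarrow> 'u \<Rightarrow> 'w"
    and C' :: "nat \<Rightarrow> 'w \<Rightarrow> 'y" and D' :: "nat \<Rightarrow> 'u \<Rightarrow> 'y"
  assumes P: "period M N = q * L" and L: "0 < L" and q: "0 < q" "q dvd M" "q dvd N"
    and bA: "\<And>t. bounded_clinear (A t)" and bA': "\<And>t. bounded_clinear (A' t)"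
    and bC': "\<And>t. bounded_clinear (C' t)"
    and perA: "\<And>t. A' (t + L) = A' t" and perB: "\<And>t. B' (t + L) = B' t"
    and perC: "\<And>t. C' (t + L) = C' t" and perD: "\<And>t. D' (t + L) = D' t"
    and i: "\<not> q dvd i"
  shows "\<exists>\<rho>>0. \<forall>z u. cmod z < \<rho> \<longrightarrow>
      htf_entry M N (\<lambda>t (x, z). (A t x, A' t z)) (\<lambda>t u. (B t u, B' t u))
          (\<lambda>t (x, z). C t x - C' t z) (\<lambda>t u. D t u - D' t u) i z u = phi M N A B C D i z u"
proof -
  define P' where "P' = period M N"
  have P0: "0 < period M N" using P L q by simp
  obtain \<rho> where \<rho>: "\<rho> > 0" and H: "\<And>z. cmod z < \<rho> \<Longrightarrow>
     inj_on (resolv_op P' A z) (bvecs P') \<and>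
     inj_on (resolv_op P' A' z) (bvecs P') \<and>
     (\<forall>u. \<exists>w1 w2. w1 \<in> bvecs P' \<and> w2 \<in> bvecs P' \<and>
        resolv_op P' A z w1 = bvec P' N B u \<and>
        resolv_op P' A' z w2 = bvec P' N B' u \<and>
        htf_entry M N (\<lambda>t (x, z). (A t x, A' t z)) (\<lambda>t u. (B t u, B' t u))
          (\<lambda>t (x, z). C t x - C' t z) (\<lambda>t u. D t u - D' t u) i z u
        = (1 / real (mbar M N)) *\<^sub>R
           (\<Sum>s\<in>{s. s < P' \<and> s mod M = i}.
              z *\<^sub>C (\<Sum>l<P'. toep P' C s l (w1 l) - toep P' C' s l (w2 l))
              + (\<Sum>s'\<in>{s'. s' < P' \<and> s' mod N = 0}. toep P' D s s' u - toep P' D' s s' u)))"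
    using err_entry[where A=A and A'=A' and B=B and B'=B' and C=C and C'=C' and D=D and D'=D' and i=i,
        OF P0 bA bA'] unfolding P'_def by blast
  have PL: "P' = q * L" using P by (simp add: P'_def)
  note tz = toep_zero[OF L q(1) PL]
  have linA': "toep P' A' r l 0 = 0" for r l using bcl_linear(3)[OF toep_bcl[OF bA']] .
  have linC': "toep P' C' r l 0 = 0" for r l using bcl_linear(3)[OF toep_bcl[OF bC']] .
  have "htf_entry M N (\<lambda>t (x, z). (A t x, A' t z)) (\<lambda>t u. (B t u, B' t u))
          (\<lambda>t (x, z). C t x - C' t z) (\<lambda>t u. D t u - D' t u) i z u = phi M N A B C D i z u"
    if z: "cmod z < \<rho>" for z u
  proof -
    obtain w1 w2 where w: "w1 \<in> bvecs P'" "w2 \<in> bvecs P'"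
        "resolv_op P' A z w1 = bvec P' N B u" "resolv_op P' A' z w2 = bvec P' N B' u"
        and ent: "htf_entry M N (\<lambda>t (x, z). (A t x, A' t z)) (\<lambda>t u. (B t u, B' t u))
          (\<lambda>t (x, z). C t x - C' t z) (\<lambda>t u. D t u - D' t u) i z u
        = (1 / real (mbar M N)) *\<^sub>R
           (\<Sum>s\<in>{s. s < P' \<and> s mod M = i}.
              z *\<^sub>C (\<Sum>l<P'. toep P' C s l (w1 l) - toep P' C' s l (w2 l))
              + (\<Sum>s'\<in>{s'. s' < P' \<and> s' mod N = 0}. toep P' D s s' u - toep P' D' s s' u))"
      using H[OF z] by blast
    have inj1: "inj_on (resolv_op P' A z) (bvecs P')" and inj2: "inj_on (resolv_op P' A' z) (bvecs P')"
      using H[OF z] by auto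
    have w1s: "solv P' A z (bvec P' N B u) = w1" by (rule solv_unique[OF inj1 w(1) w(3)])
    define w2' where "w2' l = (if q dvd l then w2 l else 0)" for l
    have w2'in: "w2' \<in> bvecs P'" using w(2) by (simp add: bvecs_def w2'_def)
    have "resolv_op P' A' z w2' = bvec P' N B' u"
    proof
      fix r
      show "resolv_op P' A' z w2' r = bvec P' N B' u r"
      proof (cases "r < P'")
        case False thus ?thesis by (simp add: resolv_op_def bvec_def)
      next
        case True
        show ?thesis
        proof (cases "q dvd r")
          case qr: True
          have "(\<Sum>l<P'. toep P' A' r l (w2' l)) = (\<Sum>l<P'. toep P' A' r l (w2 l))"
          proof (intro sum.cong refl)
            fix l
            show "toep P' A' r l (w2' l) = toep P' A' r l (w2 l)"
            proof (cases "q dvd l")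
              case False
              hence "\<not> int q dvd (int r - int l)" using dvd_int_diff2[OF qr] by simp
              thus ?thesis using False by (simp add: w2'_def tz[where F=A', OF perA] linA')
            qed (simp add: w2'_def)
          qed
          hence "resolv_op P' A' z w2' r = resolv_op P' A' z w2 r"
            using True qr by (simp add: resolv_op_def w2'_def)
          thus ?thesis using w(4) by simp
        next
          case nqr: False
          have "(\<Sum>l<P'. toep P' A' r l (w2' l)) = 0"
          proof (intro sum.neutral ballI)
            fix l
            show "toep P' A' r l (w2' l) = 0"
            proof (cases "q dvd l")
              case True
              hence "\<not> int q dvd (int r - int l)" using dvd_int_diff1[OF True] nqr by simp
              thus ?thesis by (rule tz[where F=A', OF perA])
            qed (simp add: w2'_def linA')
          qed
          moreover have "bvec P' N B' u r = 0"
            unfolding bvec_def using True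
          proof (simp, intro sum.neutral ballI)
            fix s' assume "s' \<in> {s'. s' < P' \<and> s' mod N = 0}"
            hence "q dvd s'" using mod0_dvd[OF q(3)] by auto
            hence "\<not> int q dvd (int r - int s')" using dvd_int_diff1 nqr by simp
            thus "toep P' B' r s' u = 0" by (rule tz[where F=B', OF perB])
          qed
          ultimately show ?thesis using True nqr by (simp add: resolv_op_def w2'_def)
        qed
      qed
    qed
    hence "w2' = w2" using inj_onD[OF inj2 _ w2'in w(2)] w(4) by simp
    hence w2z: "\<not> q dvd l \<Longrightarrow> w2 l = 0" for l by (metis w2'_def)
    have "(\<Sum>s\<in>{s. s < P' \<and> s mod M = i}.
              z *\<^sub>C (\<Sum>l<P'. toep P' C s l (w1 l) - toep P' C' s l (w2 l))
              + (\<Sum>s'\<in>{s'. s' < P' \<and> s' mod N = 0}. toep P' D s s' u - toep P' D' s s' u))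
        = (\<Sum>s\<in>{s. s < P' \<and> s mod M = i}.
              z *\<^sub>C (\<Sum>l<P'. toep P' C s l (w1 l))
              + (\<Sum>s'\<in>{s'. s' < P' \<and> s' mod N = 0}. toep P' D s s' u))"
    proof (intro sum.cong refl)
      fix s assume "s \<in> {s. s < P' \<and> s mod M = i}"
      hence ns: "\<not> q dvd s" using mod_notdvd[OF q(2) _ i] by auto
      have c0: "toep P' C' s l (w2 l) = 0" for l
      proof (cases "q dvd l")
        case True
        hence "\<not> int q dvd (int s - int l)" using dvd_int_diff1[OF True] ns by simp
        thus ?thesis by (rule tz[where F=C', OF perC])
      qed (simp add: w2z linC')
      have d0: "toep P' D' s s' u = 0" if "s' \<in> {s'. s' < P' \<and> s' mod N = 0}" for s'
      proof -
        have "q dvd s'" using that mod0_dvd[OF q(3)] by auto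
        hence "\<not> int q dvd (int s - int s')" using dvd_int_diff1 ns by simp
        thus ?thesis by (rule tz[where F=D', OF perD])
      qed
      show "z *\<^sub>C (\<Sum>l<P'. toep P' C s l (w1 l) - toep P' C' s l (w2 l))
              + (\<Sum>s'\<in>{s'. s' < P' \<and> s' mod N = 0}. toep P' D s s' u - toep P' D' s s' u)
          = z *\<^sub>C (\<Sum>l<P'. toep P' C s l (w1 l))
              + (\<Sum>s'\<in>{s'. s' < P' \<and> s' mod N = 0}. toep P' D s s' u)"
        using d0 by (simp add: c0)
    qed
    thus ?thesis using ent by (simp add: phi_def P'_def[symmetric] w1s)
  qed
  thus ?thesis using \<rho> by blast
qed


lemma toep_alt: "0 < P \<Longrightarrow> toep P F a b = fourier P F (int a - int b)"
  unfolding toep_def by (rule fourier_cong_mod) simp_all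

lemma synth_eq: "synth m n q F = (\<lambda>t x. \<Sum>r<T1 m n q. cis (2 * pi * real t * real r / real (T1 m n q)) *\<^sub>C F r x)"
  by (simp add: fun_eq_iff synth_def)

lemma toep_synth:
  assumes PL: "T0 m n = q * T1 m n q" and L: "0 < T1 m n q" and q: "0 < q"
  shows "toep (T0 m n) (synth m n q F) r l x =
    (if int q dvd (int r - int l) then F (nat (((int r - int l) mod int (T0 m n)) div int q)) x else 0)"
proof -
  have "toep (T0 m n) (synth m n q F) r l x =
     (if int q dvd ((int r - int l) mod int (q * T1 m n q)) then F (nat ((((int r - int l) mod int (q * T1 m n q)) mod int (q * T1 m n q)) div int q)) x else 0)"
    unfolding toep_def synth_eq PL by (rule fourier_synth_gen[OF L q])
  also have "\<dots> = (if int q dvd (int r - int l) then F (nat (((int r - int l) mod int (T0 m n)) div int q)) x else 0)"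
    unfolding PL by (simp add: dvd_mod_iff)
  finally show ?thesis .
qed

lemma fidx_cong:
  assumes PL: "T0 m n = q * T1 m n q" and L: "0 < T1 m n q" and q: "0 < q"
    and d: "int q dvd (int r - int l)"
  shows "fourier (T0 m n) F (fidx m n q (nat (((int r - int l) mod int (T0 m n)) div int q)) e)
       = fourier (T0 m n) F (int r - int l + e)"
proof -
  define k where "k = int r - int l"
  define N where "N = int (T0 m n)"
  have N: "N = int q * int (T1 m n q)" by (simp add: N_def PL)
  have dec: "k mod N = int q * int (nat ((k mod N) div int q))"
    using idx_decomp(2)[OF L q _ N] d by (simp add: k_def)
  have "fidx m n q (nat ((k mod N) div int q)) e = (k mod N + e) mod N"
    unfolding fidx_def N_def[symmetric] by (subst dec) (simp add: mult.commute)
  also have "\<dots> = (k + e) mod N" by (simp add: mod_add_left_eq)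
  finally have "fidx m n q (nat ((k mod N) div int q)) e mod N = (k + e) mod N" by simp
  hence "fourier (T0 m n) F (fidx m n q (nat ((k mod N) div int q)) e) = fourier (T0 m n) F (k + e)"
    using L q PL by (intro fourier_cong_mod) (auto simp: N_def)
  thus ?thesis by (simp add: k_def N_def)
qed

lemma synth_periodic: "synth m n q F (t + T1 m n q) = synth m n q F t"
proof -
  have "cis (2 * pi * real (t + T1 m n q) * real r / real (T1 m n q)) = cis (2 * pi * real t * real r / real (T1 m n q))"
    if "0 < T1 m n q" for r
  proof -
    have "2 * pi * real (t + T1 m n q) * real r / real (T1 m n q) = 2 * pi * real t * real r / real (T1 m n q) + 2 * pi * of_int (int r)"
      using that by (simp add: field_simps)
    thus ?thesis by (simp only: cis_shift)
  qed
  thus ?thesis by (cases "T1 m n q = 0") (auto simp: fun_eq_iff synth_def)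
qed

lemma tD_periodic: "tD m n q D (t + T1 m n q) = tD m n q D t"
  by (simp add: fun_eq_iff tD_def)

lemma bcl_synth: "(\<And>r. bounded_clinear (F r)) \<Longrightarrow> bounded_clinear (synth m n q F t)"
  unfolding synth_eq by (intro bcl_sum bcl_comp[OF bcl_scaleC]) auto

lemma bcl_tD: "(\<And>t. bounded_clinear (D t)) \<Longrightarrow> bounded_clinear (tD m n q D t)"
  unfolding tD_def[abs_def] by (intro bcl_scaleR bcl_sum) auto

lemma bcl_tAh1: "(\<And>t. bounded_clinear (A t)) \<Longrightarrow> bounded_clinear (tAh1 m n q A r :: 'x::chilbert^'q::finite \<Rightarrow> _)"
  unfolding tAh1_def[abs_def]
  by (intro bcl_vec_lambda bcl_sum bcl_comp[OF bcl_fourier] bcl_comp[OF bcl_scaleC] bcl_vec_nth) auto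

lemma bcl_tAh2: "(\<And>t. bounded_clinear (A t)) \<Longrightarrow> bounded_clinear (tAh2 m n q A r :: 'x::chilbert^'q::finite \<Rightarrow> _)"
  unfolding tAh2_def[abs_def]
  by (intro bcl_vec_lambda bcl_comp[OF bcl_scaleC] bcl_sum bcl_comp[OF bcl_fourier] bcl_vec_nth) auto

lemma bcl_tBh1: "(\<And>t. bounded_clinear (B t)) \<Longrightarrow> bounded_clinear (tBh1 m n q B r :: _ \<Rightarrow> 'x::chilbert^'q::finite)"
  unfolding tBh1_def[abs_def] by (intro bcl_vec_lambda bcl_fourier) auto

lemma bcl_tBh2: "(\<And>t. bounded_clinear (B t)) \<Longrightarrow> bounded_clinear (tBh2 m n q B r :: _ \<Rightarrow> 'x::chilbert^'q::finite)"
  unfolding tBh2_def[abs_def] by (intro bcl_vec_lambda bcl_comp[OF bcl_scaleC] bcl_fourier) auto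

lemma bcl_tCh1: "(\<And>t. bounded_clinear (C t)) \<Longrightarrow> bounded_clinear (tCh1 m n q C r :: 'x::chilbert^'q::finite \<Rightarrow> _)"
  unfolding tCh1_def[abs_def]
  by (intro bcl_sum bcl_comp[OF bcl_fourier] bcl_comp[OF bcl_scaleC] bcl_vec_nth) auto

lemma bcl_tCh2: "(\<And>t. bounded_clinear (C t)) \<Longrightarrow> bounded_clinear (tCh2 m n q C r :: 'x::chilbert^'q::finite \<Rightarrow> _)"
  unfolding tCh2_def[abs_def]
  by (intro bcl_sum bcl_comp[OF bcl_fourier] bcl_vec_nth) auto

lemma tD_sum:
  assumes "t < T1 m n q"
  shows "(\<Sum>j<q. tD m n q D (t + j * T1 m n q) u) = (\<Sum>k<q. D (t + k * T1 m n q) u)"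
proof -
  have "(t + j * T1 m n q) mod T1 m n q = t" for j using assms by simp
  hence "(\<Sum>j<q. tD m n q D (t + j * T1 m n q) u) = (\<Sum>j<q. (1 / real q) *\<^sub>R (\<Sum>k<q. D (t + k * T1 m n q) u))"
    by (simp add: tD_def)
  also have "\<dots> = (\<Sum>k<q. D (t + k * T1 m n q) u)"
    by (cases "q = 0") (simp_all add: sum_constant_scaleR)
  finally show ?thesis .
qed

lemma toep_tD:
  assumes PL: "T0 m n = q * T1 m n q" and L: "0 < T1 m n q" and q: "0 < q"
    and d: "int q dvd (int s - int s')"
  shows "toep (T0 m n) (tD m n q D) s s' u = toep (T0 m n) D s s' u"
proof -
  have P: "0 < T0 m n" using PL L q by simp
  have dd: "int q dvd ((int s - int s') mod int (q * T1 m n q))" using d by (simp add: dvd_mod_iff)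
  show ?thesis
    unfolding toep_def PL fourier_dvd[OF L q dd]
    apply (rule arg_cong[where f="scaleR _"])
    apply (rule sum.cong[OF refl])
    apply (rule arg_cong[where f="scaleC _"])
    by (simp add: tD_sum)
qed


lemma scaleC_vec_nth[simp]: "(c *\<^sub>C v) $ a = c *\<^sub>C (v $ a)"
  by (simp add: scaleC_vec_def)

lemma K2gen:
  fixes A :: "nat \<Rightarrow> 'x::chilbert \<Rightarrow> 'x" and B :: "nat \<Rightarrow> 'u::chilbert \<Rightarrow> 'x"
    and C :: "nat \<Rightarrow> 'x \<Rightarrow> 'y::chilbert" and D :: "nat \<Rightarrow> 'u \<Rightarrow> 'y"
    and At :: "nat \<Rightarrow> 'x ^ 'q::finite \<Rightarrow> 'x ^ 'q" and Bt :: "nat \<Rightarrow> 'u \<Rightarrow> 'x ^ 'q"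
    and Ct :: "nat \<Rightarrow> 'x ^ 'q \<Rightarrow> 'y" and Dt :: "nat \<Rightarrow> 'u \<Rightarrow> 'y"
    and \<gamma> \<delta> :: "'q \<Rightarrow> complex"
  assumes PL: "period m n = q * L" and L: "0 < L" and q: "0 < q" "q dvd m" "q dvd n"
    and card: "CARD('q) = q" and i: "q dvd i"
    and bA: "\<And>t. bounded_clinear (A t)" and bAt: "\<And>t. bounded_clinear (At t)"
    and CA: "\<And>r l y a. q dvd r \<Longrightarrow> q dvd l \<Longrightarrow> r < period m n \<Longrightarrow> l < period m n \<Longrightarrow>
        (toep (period m n) At r l (\<chi> b. \<gamma> b *\<^sub>C y b)) $ a
          = \<delta> a *\<^sub>C (\<Sum>b\<in>UNIV. toep (period m n) A (r + ix a) (l + ix b) (y b))"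
    and CAz: "\<And>r l x. \<not> int q dvd (int r - int l) \<Longrightarrow> toep (period m n) At r l x = 0"
    and CB: "\<And>r s' a u. q dvd r \<Longrightarrow> q dvd s' \<Longrightarrow> r < period m n \<Longrightarrow>
        (toep (period m n) Bt r s' u) $ a = \<delta> a *\<^sub>C toep (period m n) B (r + ix a) s' u"
    and CBz: "\<And>r s' u. \<not> int q dvd (int r - int s') \<Longrightarrow> toep (period m n) Bt r s' u = 0"
    and CC: "\<And>s l y. q dvd s \<Longrightarrow> q dvd l \<Longrightarrow> s < period m n \<Longrightarrow> l < period m n \<Longrightarrow>
        toep (period m n) Ct s l (\<chi> b. \<gamma> b *\<^sub>C y b) = (\<Sum>b\<in>UNIV. toep (period m n) C s (l + ix b) (y b))"
    and CCz: "\<And>s l x. \<not> int q dvd (int s - int l) \<Longrightarrow> toep (period m n) Ct s l x = 0"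
    and CD: "\<And>s s' u. int q dvd (int s - int s') \<Longrightarrow> toep (period m n) Dt s s' u = toep (period m n) D s s' u"
    and Cg: "\<And>r a (x::'x). cis (2 * pi * real r / real (period m n)) *\<^sub>C (\<gamma> a *\<^sub>C x)
        = \<delta> a *\<^sub>C (cis (2 * pi * real (r + ix a) / real (period m n)) *\<^sub>C x)"
  shows "\<exists>\<rho>>0. \<forall>z u. cmod z < \<rho> \<longrightarrow>
      htf_entry m n (\<lambda>t (x, z). (A t x, At t z)) (\<lambda>t u. (B t u, Bt t u))
          (\<lambda>t (x, z). C t x - Ct t z) (\<lambda>t u. D t u - Dt t u) i z u = 0"
proof -
  define P' where "P' = period m n"
  have P0: "0 < period m n" using PL L q by simp
  have PL': "P' = q * L" using PL by (simp add: P'_def)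
  obtain \<rho> where \<rho>: "\<rho> > 0" and H: "\<And>z. cmod z < \<rho> \<Longrightarrow>
     inj_on (resolv_op P' A z) (bvecs P') \<and>
     inj_on (resolv_op P' At z) (bvecs P') \<and>
     (\<forall>u. \<exists>w1 w2. w1 \<in> bvecs P' \<and> w2 \<in> bvecs P' \<and>
        resolv_op P' A z w1 = bvec P' n B u \<and>
        resolv_op P' At z w2 = bvec P' n Bt u \<and>
        htf_entry m n (\<lambda>t (x, z). (A t x, At t z)) (\<lambda>t u. (B t u, Bt t u))
          (\<lambda>t (x, z). C t x - Ct t z) (\<lambda>t u. D t u - Dt t u) i z u
        = (1 / real (mbar m n)) *\<^sub>R
           (\<Sum>s\<in>{s. s < P' \<and> s mod m = i}.
              z *\<^sub>C (\<Sum>l<P'. toep P' C s l (w1 l) - toep P' Ct s l (w2 l))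
              + (\<Sum>s'\<in>{s'. s' < P' \<and> s' mod n = 0}. toep P' D s s' u - toep P' Dt s s' u)))"
    using err_entry[where A=A and A'=At and B=B and B'=Bt and C=C and C'=Ct and D=D and D'=Dt and i=i,
        OF P0 bA bAt] unfolding P'_def by blast
  have linAt: "toep P' At r l 0 = 0" for r l using bcl_linear(3)[OF toep_bcl[OF bAt]] .
  have Rlt: "r + ix a < P'" if qr0: "q dvd r" and rl0: "r < P'" for r and a :: 'q
  proof -
    obtain k where k: "r = q * k" using qr0 by auto
    have "k < L" using rl0 PL' q by (simp add: k)
    hence "k + 1 \<le> L" by simp
    hence "q * (k + 1) \<le> q * L" by (rule mult_le_mono2)
    moreover have "ix a < q" using ix_less[of a] card by simp
    ultimately show ?thesis using PL' k by (simp add: algebra_simps)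
  qed
  have blocks: "(\<Sum>l<P'. if q dvd l then (\<Sum>b\<in>(UNIV::'q set). G (l + ix b)) else 0) = (\<Sum>t<P'. G t)"
    for G :: "nat \<Rightarrow> 'y"
    unfolding PL' by (rule sum_blocks_ix[OF card])
  have blocksx: "(\<Sum>l<P'. if q dvd l then (\<Sum>b\<in>(UNIV::'q set). G (l + ix b)) else 0) = (\<Sum>t<P'. G t)"
    for G :: "nat \<Rightarrow> 'x"
    unfolding PL' by (rule sum_blocks_ix[OF card])
  have "htf_entry m n (\<lambda>t (x, z). (A t x, At t z)) (\<lambda>t u. (B t u, Bt t u))
          (\<lambda>t (x, z). C t x - Ct t z) (\<lambda>t u. D t u - Dt t u) i z u = 0"
    if z: "cmod z < \<rho>" for z u
  proof -
    obtain w1 w2 where w: "w1 \<in> bvecs P'" "w2 \<in> bvecs P'"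
        "resolv_op P' A z w1 = bvec P' n B u" "resolv_op P' At z w2 = bvec P' n Bt u"
        and ent: "htf_entry m n (\<lambda>t (x, z). (A t x, At t z)) (\<lambda>t u. (B t u, Bt t u))
          (\<lambda>t (x, z). C t x - Ct t z) (\<lambda>t u. D t u - Dt t u) i z u
        = (1 / real (mbar m n)) *\<^sub>R
           (\<Sum>s\<in>{s. s < P' \<and> s mod m = i}.
              z *\<^sub>C (\<Sum>l<P'. toep P' C s l (w1 l) - toep P' Ct s l (w2 l))
              + (\<Sum>s'\<in>{s'. s' < P' \<and> s' mod n = 0}. toep P' D s s' u - toep P' Dt s s' u))"
      using H[OF z] by blast
    have inj2: "inj_on (resolv_op P' At z) (bvecs P')" using H[OF z] by auto
    define W where "W l = (if l < P' \<and> q dvd l then (\<chi> b. \<gamma> b *\<^sub>C w1 (l + ix b)) else 0)" for l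
    have Win: "W \<in> bvecs P'" by (simp add: bvecs_def W_def)
    have "resolv_op P' At z W = bvec P' n Bt u"
    proof
      fix r
      show "resolv_op P' At z W r = bvec P' n Bt u r"
      proof (cases "r < P'")
        case False thus ?thesis by (simp add: resolv_op_def bvec_def)
      next
        case True
        note rP = True
        show ?thesis
        proof (cases "q dvd r")
          case qr: True
          show ?thesis
          proof (rule vec_eq_iff[THEN iffD2], rule allI)
            fix a :: 'q
            define R where "R = r + ix a"
            have R: "R < P'" unfolding R_def by (rule Rlt[OF qr True])
            have "(\<Sum>l<P'. toep P' At r l (W l)) $ a
                = (\<Sum>l<P'. if q dvd l then \<delta> a *\<^sub>C (\<Sum>b\<in>(UNIV::'q set). toep P' A R (l + ix b) (w1 (l + ix b))) else 0)"
              unfolding sum_component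
            proof (intro sum.cong refl)
              fix l assume l: "l \<in> {..<P'}"
              show "toep P' At r l (W l) $ a
                = (if q dvd l then \<delta> a *\<^sub>C (\<Sum>b\<in>(UNIV::'q set). toep P' A R (l + ix b) (w1 (l + ix b))) else 0)"
              proof (cases "q dvd l")
                case True
                have lP: "l < P'" using l by simp
                have "W l = (\<chi> b. \<gamma> b *\<^sub>C w1 (l + ix b))" using lP True by (simp add: W_def)
                thus ?thesis using CA[folded P'_def, OF qr True rP lP, of "\<lambda>b. w1 (l + ix b)" a] True
                  by (simp add: R_def)
              next
                case False
                hence "\<not> int q dvd (int r - int l)" using dvd_int_diff2[OF qr] by simp
                thus ?thesis using False by (simp add: CAz[unfolded P'_def[symmetric]])
              qed
            qed
            also have "\<dots> = \<delta> a *\<^sub>C (\<Sum>l<P'. if q dvd l then (\<Sum>b\<in>(UNIV::'q set). toep P' A R (l + ix b) (w1 (l + ix b))) else 0)"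
              by (simp add: scaleC_sum_right if_distrib cong: if_cong)
            also have "\<dots> = \<delta> a *\<^sub>C (\<Sum>t<P'. toep P' A R t (w1 t))"
              using blocksx[of "\<lambda>t. toep P' A R t (w1 t)"] by simp
            finally have S: "(\<Sum>l<P'. toep P' At r l (W l)) $ a = \<delta> a *\<^sub>C (\<Sum>t<P'. toep P' A R t (w1 t))" .
            have Wr: "W r $ a = \<gamma> a *\<^sub>C w1 R" using True qr by (simp add: W_def R_def)
            have "resolv_op P' At z W r = cis (2 * pi * real r / real P') *\<^sub>C W r - z *\<^sub>C (\<Sum>l<P'. toep P' At r l (W l))"
              using True by (simp add: resolv_op_def)
            hence "resolv_op P' At z W r $ a = cis (2 * pi * real r / real P') *\<^sub>C (W r $ a) - z *\<^sub>C ((\<Sum>l<P'. toep P' At r l (W l)) $ a)"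
              by (simp only: vector_minus_component scaleC_vec_nth)
            also have "\<dots> = cis (2 * pi * real r / real P') *\<^sub>C (\<gamma> a *\<^sub>C w1 R) - z *\<^sub>C (\<delta> a *\<^sub>C (\<Sum>t<P'. toep P' A R t (w1 t)))"
              by (simp only: Wr S)
            also have "\<dots> = \<delta> a *\<^sub>C (cis (2 * pi * real R / real P') *\<^sub>C w1 R - z *\<^sub>C (\<Sum>t<P'. toep P' A R t (w1 t)))"
            proof -
              have e1: "cis (2 * pi * real r / real P') *\<^sub>C (\<gamma> a *\<^sub>C w1 R) = \<delta> a *\<^sub>C (cis (2 * pi * real R / real P') *\<^sub>C w1 R)"
                unfolding R_def by (rule Cg[folded P'_def])
              have e2: "z *\<^sub>C (\<delta> a *\<^sub>C (\<Sum>t<P'. toep P' A R t (w1 t))) = \<delta> a *\<^sub>C (z *\<^sub>C (\<Sum>t<P'. toep P' A R t (w1 t)))"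
                by (simp add: scaleC_scaleC mult.commute)
              show ?thesis by (simp only: e1 e2 scaleC_diff_right)
            qed
            also have "\<dots> = \<delta> a *\<^sub>C bvec P' n B u R"
              using fun_cong[OF w(3), of R] R by (simp add: resolv_op_def)
            also have "\<dots> = bvec P' n Bt u r $ a"
              using True R unfolding bvec_def
              by (simp add: scaleC_sum_right R_def CB[unfolded P'_def[symmetric]] qr mod0_dvd[OF q(3)])
            finally show "resolv_op P' At z W r $ a = bvec P' n Bt u r $ a" .
          qed
        next
          case nqr: False
          have "(\<Sum>l<P'. toep P' At r l (W l)) = 0"
          proof (intro sum.neutral ballI)
            fix l
            show "toep P' At r l (W l) = 0"
            proof (cases "q dvd l")
              case True
              hence "\<not> int q dvd (int r - int l)" using dvd_int_diff1[OF True] nqr by simp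
              thus ?thesis by (rule CAz[unfolded P'_def[symmetric]])
            qed (simp add: W_def linAt)
          qed
          moreover have "bvec P' n Bt u r = 0"
            unfolding bvec_def using True
          proof (simp, intro sum.neutral ballI)
            fix s' assume "s' \<in> {s'. s' < P' \<and> s' mod n = 0}"
            hence "q dvd s'" using mod0_dvd[OF q(3)] by auto
            hence "\<not> int q dvd (int r - int s')" using dvd_int_diff1 nqr by simp
            thus "toep P' Bt r s' u = 0" by (rule CBz[unfolded P'_def[symmetric]])
          qed
          ultimately show ?thesis using True nqr by (simp add: resolv_op_def W_def)
        qed
      qed
    qed
    hence W2: "W = w2" using inj_onD[OF inj2 _ Win w(2)] w(4) by simp
    have "(\<Sum>s\<in>{s. s < P' \<and> s mod m = i}.
              z *\<^sub>C (\<Sum>l<P'. toep P' C s l (w1 l) - toep P' Ct s l (w2 l))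
              + (\<Sum>s'\<in>{s'. s' < P' \<and> s' mod n = 0}. toep P' D s s' u - toep P' Dt s s' u)) = 0"
    proof (intro sum.neutral ballI)
      fix s assume s: "s \<in> {s. s < P' \<and> s mod m = i}"
      have qs: "q dvd s" using s q(2) i by (metis (mono_tags, lifting) mem_Collect_eq dvd_mod_imp_dvd)
      have "(\<Sum>l<P'. toep P' Ct s l (w2 l)) = (\<Sum>l<P'. if q dvd l then (\<Sum>b\<in>(UNIV::'q set). toep P' C s (l + ix b) (w1 (l + ix b))) else 0)"
      proof (intro sum.cong refl)
        fix l assume l: "l \<in> {..<P'}"
        show "toep P' Ct s l (w2 l) = (if q dvd l then (\<Sum>b\<in>(UNIV::'q set). toep P' C s (l + ix b) (w1 (l + ix b))) else 0)"
        proof (cases "q dvd l")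
          case True
          thus ?thesis using l s qs by (simp add: W2[symmetric] W_def CC[unfolded P'_def[symmetric]])
        next
          case False
          hence "\<not> int q dvd (int s - int l)" using dvd_int_diff2[OF qs] by simp
          thus ?thesis using False by (simp add: CCz[unfolded P'_def[symmetric]])
        qed
      qed
      also have "\<dots> = (\<Sum>l<P'. toep P' C s l (w1 l))"
        using blocks[of "\<lambda>t. toep P' C s t (w1 t)"] by simp
      finally have c: "(\<Sum>l<P'. toep P' C s l (w1 l) - toep P' Ct s l (w2 l)) = 0"
        by (simp add: sum_subtractf)
      have d: "(\<Sum>s'\<in>{s'. s' < P' \<and> s' mod n = 0}. toep P' D s s' u - toep P' Dt s s' u) = 0"
      proof (intro sum.neutral ballI)
        fix s' assume "s' \<in> {s'. s' < P' \<and> s' mod n = 0}"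
        hence "q dvd s'" using mod0_dvd[OF q(3)] by auto
        hence "int q dvd (int s - int s')" using dvd_int_diff1 qs by simp
        thus "toep P' D s s' u - toep P' Dt s s' u = 0" by (simp add: CD[unfolded P'_def[symmetric]])
      qed
      show "z *\<^sub>C (\<Sum>l<P'. toep P' C s l (w1 l) - toep P' Ct s l (w2 l))
              + (\<Sum>s'\<in>{s'. s' < P' \<and> s' mod n = 0}. toep P' D s s' u - toep P' Dt s s' u) = 0"
        by (simp add: c d)
    qed
    thus ?thesis using ent by simp
  qed
  thus ?thesis using \<rho> by blast
qed


lemma toep_synth_dvd:
  assumes PL: "T0 m n = q * T1 m n q" and L: "0 < T1 m n q" and q: "0 < q"
    and d: "int q dvd (int r - int l)"
  shows "toep (T0 m n) (synth m n q F) r l x = F (nat (((int r - int l) mod int (T0 m n)) div int q)) x"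
  by (subst toep_synth[OF PL L q]) (simp add: d)

lemma toep_synth_ndvd:
  assumes PL: "T0 m n = q * T1 m n q" and L: "0 < T1 m n q" and q: "0 < q"
    and d: "\<not> int q dvd (int r - int l)"
  shows "toep (T0 m n) (synth m n q F) r l x = 0"
  by (subst toep_synth[OF PL L q]) (simp add: d)

lemma dvd_diff_nat_int: "q dvd r \<Longrightarrow> q dvd l \<Longrightarrow> int q dvd (int r - int l)"
  by (simp add: dvd_diff)

lemma epsm_cis: "epsm P k *\<^sub>C (cis (2 * pi * real k / real P) *\<^sub>C (x::'a::chilbert)) = x"
  unfolding epsm_def using cis_inv_scaleC'[of "2 * pi * real k / real P" x] by simp

lemma K2_v1:
  fixes A :: "nat \<Rightarrow> 'x::chilbert \<Rightarrow> 'x" and B :: "nat \<Rightarrow> 'u::chilbert \<Rightarrow> 'x"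
    and C :: "nat \<Rightarrow> 'x \<Rightarrow> 'y::chilbert" and D :: "nat \<Rightarrow> 'u \<Rightarrow> 'y"
  assumes q: "0 < q" "q dvd m" "q dvd n" and mn: "0 < m" "0 < n" and card: "CARD('q::finite) = q"
    and i: "q dvd i"
    and bA: "\<And>t. bounded_clinear (A t)" and bB: "\<And>t. bounded_clinear (B t)" and bC: "\<And>t. bounded_clinear (C t)"
  shows "\<exists>\<rho>>0. \<forall>z u. cmod z < \<rho> \<longrightarrow>
      htf_entry m n (\<lambda>t (x, z). (A t x, (synth m n q (tAh1 m n q A) :: nat \<Rightarrow> 'x ^ 'q \<Rightarrow> 'x ^ 'q) t z))
        (\<lambda>t u. (B t u, synth m n q (tBh1 m n q B) t u))
        (\<lambda>t (x, z). C t x - synth m n q (tCh1 m n q C) t z) (\<lambda>t u. D t u - tD m n q D t u) i z u = 0"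
proof -
  note pf = per_facts[OF q mn]
  have T0p: "period m n = T0 m n" by (simp add: T0_def)
  note PL = pf(1) and L = pf(2)
  note sd = toep_synth_dvd[OF PL L q(1)] and snd = toep_synth_ndvd[OF PL L q(1)]
  note fc = fidx_cong[OF PL L q(1)]
  have P0: "0 < T0 m n" using PL L q by simp
  note ta = toep_alt[OF P0]
  show ?thesis
  proof (rule K2gen[where L="T1 m n q" and \<gamma>="\<lambda>b. cis (2 * pi * real (ix b) / real (T0 m n))" and \<delta>="\<lambda>a. 1"],
      unfold T0p)
    show "T0 m n = q * T1 m n q" by (rule PL)
    show "0 < T1 m n q" by (rule L)
    show "0 < q" "q dvd m" "q dvd n" "CARD('q) = q" "q dvd i" by (fact q card i)+
    show "\<And>t. bounded_clinear (A t)" by (fact bA)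
    show "\<And>t. bounded_clinear (synth m n q (tAh1 m n q A) t :: 'x ^ 'q \<Rightarrow> 'x ^ 'q)"
      by (intro bcl_synth bcl_tAh1 bA)
  next
    fix r l and y :: "'q \<Rightarrow> 'x" and a :: 'q
    assume qr: "q dvd r" and ql: "q dvd l"
    have d: "int q dvd (int r - int l)" by (rule dvd_diff_nat_int[OF qr ql])
    show "toep (T0 m n) (synth m n q (tAh1 m n q A)) r l (\<chi> b. cis (2 * pi * real (ix b) / real (T0 m n)) *\<^sub>C y b) $ a =
       1 *\<^sub>C (\<Sum>b\<in>UNIV. toep (T0 m n) A (r + ix a) (l + ix b) (y b))"
      unfolding sd[OF d] tAh1_def vec_lambda_beta epsm_cis using d
      by (simp add: fc ta algebra_simps)
  next
    fix r l and x :: "'x ^ 'q"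
    assume "\<not> int q dvd (int r - int l)"
    thus "toep (T0 m n) (synth m n q (tAh1 m n q A)) r l x = 0" by (rule snd)
  next
    fix r s' a u
    assume qr: "q dvd r" and qs: "q dvd s'"
    have d: "int q dvd (int r - int s')" by (rule dvd_diff_nat_int[OF qr qs])
    show "toep (T0 m n) (synth m n q (tBh1 m n q B)) r s' u $ a = 1 *\<^sub>C toep (T0 m n) B (r + ix a) s' u"
      unfolding sd[OF d] tBh1_def using d by (simp add: fc ta algebra_simps)
  next
    fix r s' u
    assume "\<not> int q dvd (int r - int s')"
    thus "toep (T0 m n) (synth m n q (tBh1 m n q B)) r s' u = (0 :: 'x ^ 'q)" by (rule snd)
  next
    fix s l and y :: "'q \<Rightarrow> 'x"
    assume qs: "q dvd s" and ql: "q dvd l"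
    have d: "int q dvd (int s - int l)" by (rule dvd_diff_nat_int[OF qs ql])
    show "toep (T0 m n) (synth m n q (tCh1 m n q C)) s l (\<chi> b. cis (2 * pi * real (ix b) / real (T0 m n)) *\<^sub>C y b) =
       (\<Sum>b\<in>UNIV. toep (T0 m n) C s (l + ix b) (y b))"
      unfolding sd[OF d] tCh1_def vec_lambda_beta epsm_cis using d by (simp add: fc ta algebra_simps)
  next
    fix s l and x :: "'x ^ 'q"
    assume "\<not> int q dvd (int s - int l)"
    thus "toep (T0 m n) (synth m n q (tCh1 m n q C)) s l x = 0" by (rule snd)
  next
    fix s s' u
    assume "int q dvd (int s - int s')"
    thus "toep (T0 m n) (tD m n q D) s s' u = toep (T0 m n) D s s' u" by (rule toep_tD[OF PL L q(1)])
  next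
    fix r a and x :: 'x
    show "cis (2 * pi * real r / real (T0 m n)) *\<^sub>C (cis (2 * pi * real (ix a) / real (T0 m n)) *\<^sub>C x) =
       1 *\<^sub>C (cis (2 * pi * real (r + ix a) / real (T0 m n)) *\<^sub>C x)"
      by (simp add: scaleC_scaleC cis_mult add_divide_distrib distrib_left)
  qed
qed


lemma K2_v2:
  fixes A :: "nat \<Rightarrow> 'x::chilbert \<Rightarrow> 'x" and B :: "nat \<Rightarrow> 'u::chilbert \<Rightarrow> 'x"
    and C :: "nat \<Rightarrow> 'x \<Rightarrow> 'y::chilbert" and D :: "nat \<Rightarrow> 'u \<Rightarrow> 'y"
  assumes q: "0 < q" "q dvd m" "q dvd n" and mn: "0 < m" "0 < n" and card: "CARD('q::finite) = q"
    and i: "q dvd i"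
    and bA: "\<And>t. bounded_clinear (A t)" and bB: "\<And>t. bounded_clinear (B t)" and bC: "\<And>t. bounded_clinear (C t)"
  shows "\<exists>\<rho>>0. \<forall>z u. cmod z < \<rho> \<longrightarrow>
      htf_entry m n (\<lambda>t (x, z). (A t x, (synth m n q (tAh2 m n q A) :: nat \<Rightarrow> 'x ^ 'q \<Rightarrow> 'x ^ 'q) t z))
        (\<lambda>t u. (B t u, synth m n q (tBh2 m n q B) t u))
        (\<lambda>t (x, z). C t x - synth m n q (tCh2 m n q C) t z) (\<lambda>t u. D t u - tD m n q D t u) i z u = 0"
proof -
  note pf = per_facts[OF q mn]
  have T0p: "period m n = T0 m n" by (simp add: T0_def)
  note PL = pf(1) and L = pf(2)
  note sd = toep_synth_dvd[OF PL L q(1)] and snd = toep_synth_ndvd[OF PL L q(1)]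
  note fc = fidx_cong[OF PL L q(1)]
  have P0: "0 < T0 m n" using PL L q by simp
  note ta = toep_alt[OF P0]
  show ?thesis
  proof (rule K2gen[where L="T1 m n q" and \<gamma>="\<lambda>b. 1" and \<delta>="\<lambda>a. epsm (T0 m n) (ix a)"],
      unfold T0p)
    show "T0 m n = q * T1 m n q" by (rule PL)
    show "0 < T1 m n q" by (rule L)
    show "0 < q" "q dvd m" "q dvd n" "CARD('q) = q" "q dvd i" by (fact q card i)+
    show "\<And>t. bounded_clinear (A t)" by (fact bA)
    show "\<And>t. bounded_clinear (synth m n q (tAh2 m n q A) t :: 'x ^ 'q \<Rightarrow> 'x ^ 'q)"
      by (intro bcl_synth bcl_tAh2 bA)
  next
    fix r l and y :: "'q \<Rightarrow> 'x" and a :: 'q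
    assume qr: "q dvd r" and ql: "q dvd l"
    have d: "int q dvd (int r - int l)" by (rule dvd_diff_nat_int[OF qr ql])
    show "toep (T0 m n) (synth m n q (tAh2 m n q A)) r l (\<chi> b. 1 *\<^sub>C y b) $ a =
       epsm (T0 m n) (ix a) *\<^sub>C (\<Sum>b\<in>UNIV. toep (T0 m n) A (r + ix a) (l + ix b) (y b))"
      unfolding sd[OF d] tAh2_def vec_lambda_beta scaleC_one using d
      by (simp add: fc ta algebra_simps)
  next
    fix r l and x :: "'x ^ 'q"
    assume "\<not> int q dvd (int r - int l)"
    thus "toep (T0 m n) (synth m n q (tAh2 m n q A)) r l x = 0" by (rule snd)
  next
    fix r s' a u
    assume qr: "q dvd r" and qs: "q dvd s'"
    have d: "int q dvd (int r - int s')" by (rule dvd_diff_nat_int[OF qr qs])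
    show "toep (T0 m n) (synth m n q (tBh2 m n q B)) r s' u $ a = epsm (T0 m n) (ix a) *\<^sub>C toep (T0 m n) B (r + ix a) s' u"
      unfolding sd[OF d] tBh2_def using d by (simp add: fc ta algebra_simps)
  next
    fix r s' u
    assume "\<not> int q dvd (int r - int s')"
    thus "toep (T0 m n) (synth m n q (tBh2 m n q B)) r s' u = (0 :: 'x ^ 'q)" by (rule snd)
  next
    fix s l and y :: "'q \<Rightarrow> 'x"
    assume qs: "q dvd s" and ql: "q dvd l"
    have d: "int q dvd (int s - int l)" by (rule dvd_diff_nat_int[OF qs ql])
    show "toep (T0 m n) (synth m n q (tCh2 m n q C)) s l (\<chi> b. 1 *\<^sub>C y b) =
       (\<Sum>b\<in>UNIV. toep (T0 m n) C s (l + ix b) (y b))"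
      unfolding sd[OF d] tCh2_def vec_lambda_beta scaleC_one using d by (simp add: fc ta algebra_simps)
  next
    fix s l and x :: "'x ^ 'q"
    assume "\<not> int q dvd (int s - int l)"
    thus "toep (T0 m n) (synth m n q (tCh2 m n q C)) s l x = 0" by (rule snd)
  next
    fix s s' u
    assume "int q dvd (int s - int s')"
    thus "toep (T0 m n) (tD m n q D) s s' u = toep (T0 m n) D s s' u" by (rule toep_tD[OF PL L q(1)])
  next
    fix r a and x :: 'x
    show "cis (2 * pi * real r / real (T0 m n)) *\<^sub>C (1 *\<^sub>C x) =
       epsm (T0 m n) (ix a) *\<^sub>C (cis (2 * pi * real (r + ix a) / real (T0 m n)) *\<^sub>C x)"
      by (simp add: epsm_def scaleC_scaleC cis_mult add_divide_distrib distrib_left)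
  qed
qed


lemma mr_K1:
  fixes A :: "nat \<Rightarrow> 'x::chilbert \<Rightarrow> 'x" and B :: "nat \<Rightarrow> 'u::chilbert \<Rightarrow> 'x"
    and C :: "nat \<Rightarrow> 'x \<Rightarrow> 'y::chilbert" and D :: "nat \<Rightarrow> 'u \<Rightarrow> 'y"
    and A' :: "nat \<Rightarrow> 'w::chilbert \<Rightarrow> 'w" and B' :: "nat \<Rightarrow> 'u \<Rightarrow> 'w"
    and C' :: "nat \<Rightarrow> 'w \<Rightarrow> 'y" and D' :: "nat \<Rightarrow> 'u \<Rightarrow> 'y"
  assumes q: "0 < q" "q dvd m" "q dvd n" and mr: "multirate m n A B C D"
    and mr': "multirate (m div q) (n div q) A' B' C' D'" and i: "\<not> q dvd i"
  shows "\<exists>\<rho>>0. \<forall>z u. cmod z < \<rho> \<longrightarrow>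
      htf_entry m n (\<lambda>t (x, z). (A t x, A' t z)) (\<lambda>t u. (B t u, B' t u))
          (\<lambda>t (x, z). C t x - C' t z) (\<lambda>t u. D t u - D' t u) i z u = phi m n A B C D i z u"
proof -
  have mn: "0 < m" "0 < n" using mr by (auto simp: multirate_def)
  note pf = per_facts[OF q mn]
  have P: "period m n = q * T1 m n q" using pf(1) by (simp add: T0_def)
  have per: "\<And>t. A' (t + T1 m n q) = A' t" "\<And>t. B' (t + T1 m n q) = B' t"
    "\<And>t. C' (t + T1 m n q) = C' t" "\<And>t. D' (t + T1 m n q) = D' t"
    using mr' by (auto simp: multirate_def pf(3))
  have b: "\<And>t. bounded_clinear (A t)" "\<And>t. bounded_clinear (A' t)" "\<And>t. bounded_clinear (C' t)"
    using mr mr' by (auto simp: multirate_def)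
  show ?thesis by (rule K1[where A=A and B=B and C=C and D=D and A'=A' and B'=B' and C'=C' and D'=D', OF P pf(2) q b per i])
qed

lemma mr_tilde:
  assumes q: "0 < q" "q dvd m" "q dvd n" and mn: "0 < m" "0 < n"
    and bA: "\<And>r. bounded_clinear (At r)" and bB: "\<And>r. bounded_clinear (Bt r)"
    and bC: "\<And>r. bounded_clinear (Ct r)" and bD: "\<And>t. bounded_clinear (D t)"
  shows "multirate (m div q) (n div q) (synth m n q At) (synth m n q Bt) (synth m n q Ct) (tD m n q D)"
proof -
  note pf = per_facts[OF q mn]
  have "0 < m div q" "0 < n div q" using q mn by (auto simp: dvd_div_eq_0_iff)
  thus ?thesis unfolding multirate_def pf(3)[symmetric]
    by (simp add: synth_periodic tD_periodic bcl_synth bcl_tD bA bB bC bD)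
qed

lemma main_opt:
  fixes A :: "nat \<Rightarrow> 'x::chilbert \<Rightarrow> 'x" and B :: "nat \<Rightarrow> 'u::chilbert \<Rightarrow> 'x"
    and C :: "nat \<Rightarrow> 'x \<Rightarrow> 'y::chilbert" and D :: "nat \<Rightarrow> 'u \<Rightarrow> 'y"
    and At :: "nat \<Rightarrow> 'w::chilbert \<Rightarrow> 'w" and Bt :: "nat \<Rightarrow> 'u \<Rightarrow> 'w"
    and Ct :: "nat \<Rightarrow> 'w \<Rightarrow> 'y" and Dt :: "nat \<Rightarrow> 'u \<Rightarrow> 'y"
  assumes q: "0 < q" "q dvd m" "q dvd n" and mr: "multirate m n A B C D"
    and mrt: "multirate (m div q) (n div q) At Bt Ct Dt"
    and Hz: "\<And>i. q dvd i \<Longrightarrow> \<exists>\<rho>>0. \<forall>z u. cmod z < \<rho> \<longrightarrow>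
      htf_entry m n (\<lambda>t (x, z). (A t x, At t z)) (\<lambda>t u. (B t u, Bt t u))
          (\<lambda>t (x, z). C t x - Ct t z) (\<lambda>t u. D t u - Dt t u) i z u = 0"
  shows "mr_optimal TYPE('z::chilbert) E m n A B C D (m div q) (n div q) At Bt Ct Dt"
  unfolding mr_optimal_def
proof (intro conjI allI impI)
  show "multirate (m div q) (n div q) At Bt Ct Dt" by (rule mrt)
  fix Ah :: "nat \<Rightarrow> 'z \<Rightarrow> 'z" and Bh :: "nat \<Rightarrow> 'u \<Rightarrow> 'z"
    and Ch :: "nat \<Rightarrow> 'z \<Rightarrow> 'y" and Dh :: "nat \<Rightarrow> 'u \<Rightarrow> 'y"
  assume mrh: "multirate (m div q) (n div q) Ah Bh Ch Dh"
  have mn: "0 < m" "0 < n" using mr by (auto simp: multirate_def)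
  note pf = per_facts[OF q mn]
  define S :: "(nat \<Rightarrow> 'u \<Rightarrow> 'y) \<Rightarrow> ennreal" where
    "S g = (\<Sum>\<^sub>\<infinity>e\<in>E. \<Sum>\<^sub>\<infinity>k\<in>(UNIV::nat set). ennreal ((norm (g k e))\<^sup>2))" for g
  have le: "S (htf_coeff m n (\<lambda>t (x, z). (A t x, At t z)) (\<lambda>t u. (B t u, Bt t u))
          (\<lambda>t (x, z). C t x - Ct t z) (\<lambda>t u. D t u - Dt t u) i)
      \<le> S (htf_coeff m n (\<lambda>t (x, z). (A t x, Ah t z)) (\<lambda>t u. (B t u, Bh t u))
          (\<lambda>t (x, z). C t x - Ch t z) (\<lambda>t u. D t u - Dh t u) i)" for i
  proof (cases "q dvd i")
    case True
    obtain \<rho> where \<rho>: "\<rho> > 0" "\<forall>z u. cmod z < \<rho> \<longrightarrow>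
      htf_entry m n (\<lambda>t (x, z). (A t x, At t z)) (\<lambda>t u. (B t u, Bt t u))
          (\<lambda>t (x, z). C t x - Ct t z) (\<lambda>t u. D t u - Dt t u) i z u = 0"
      using Hz[OF True] by blast
    have "htf_coeff m n (\<lambda>t (x, z). (A t x, At t z)) (\<lambda>t u. (B t u, Bt t u))
          (\<lambda>t (x, z). C t x - Ct t z) (\<lambda>t u. D t u - Dt t u) i = (\<lambda>k u. 0)"
      using \<rho> by (intro htf_coeff_zero[of \<rho>]) auto
    thus ?thesis by (simp add: S_def)
  next
    case False
    obtain \<rho>1 where \<rho>1: "\<rho>1 > 0" "\<forall>z u. cmod z < \<rho>1 \<longrightarrow>
      htf_entry m n (\<lambda>t (x, z). (A t x, At t z)) (\<lambda>t u. (B t u, Bt t u))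
          (\<lambda>t (x, z). C t x - Ct t z) (\<lambda>t u. D t u - Dt t u) i z u = phi m n A B C D i z u"
      using mr_K1[OF q mr mrt False] by blast
    obtain \<rho>2 where \<rho>2: "\<rho>2 > 0" "\<forall>z u. cmod z < \<rho>2 \<longrightarrow>
      htf_entry m n (\<lambda>t (x, z). (A t x, Ah t z)) (\<lambda>t u. (B t u, Bh t u))
          (\<lambda>t (x, z). C t x - Ch t z) (\<lambda>t u. D t u - Dh t u) i z u = phi m n A B C D i z u"
      using mr_K1[OF q mr mrh False] by blast
    have "htf_coeff m n (\<lambda>t (x, z). (A t x, At t z)) (\<lambda>t u. (B t u, Bt t u))
          (\<lambda>t (x, z). C t x - Ct t z) (\<lambda>t u. D t u - Dt t u) i
        = htf_coeff m n (\<lambda>t (x, z). (A t x, Ah t z)) (\<lambda>t u. (B t u, Bh t u))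
          (\<lambda>t (x, z). C t x - Ch t z) (\<lambda>t u. D t u - Dh t u) i"
      using \<rho>1 \<rho>2 by (intro htf_coeff_cong[of "min \<rho>1 \<rho>2"]) auto
    thus ?thesis by simp
  qed
  show "err_norm_sq E m n A B C D (m div q) (n div q) At Bt Ct Dt
      \<le> err_norm_sq E m n A B C D (m div q) (n div q) Ah Bh Ch Dh"
    unfolding err_norm_sq_def pf(6) pf(7) hnorm_sq_def S_def[symmetric]
    by (intro sum_mono le)
qed

theorem theorem13:
  fixes A :: "nat \<Rightarrow> 'x::chilbert \<Rightarrow> 'x" and B :: "nat \<Rightarrow> 'u::chilbert \<Rightarrow> 'x"
    and C :: "nat \<Rightarrow> 'x \<Rightarrow> 'y::chilbert" and D :: "nat \<Rightarrow> 'u \<Rightarrow> 'y"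
    and E :: "'u set" and m n q :: nat
  assumes "separable_hilbert TYPE('u)" and "separable_hilbert TYPE('x)"
    and "separable_hilbert TYPE('y)" and "separable_hilbert TYPE('z::chilbert)"
    and "multirate m n A B C D"
    and "onb E"
    and "0 < q" and "q dvd m" and "q dvd n"
    and "CARD('q::finite) = q"
  shows "mr_optimal TYPE('z) E m n A B C D (m div q) (n div q)
           (synth m n q (tAh1 m n q A) :: nat \<Rightarrow> 'x ^ 'q \<Rightarrow> 'x ^ 'q)
           (synth m n q (tBh1 m n q B)) (synth m n q (tCh1 m n q C)) (tD m n q D)
       \<and> mr_optimal TYPE('z) E m n A B C D (m div q) (n div q)
           (synth m n q (tAh2 m n q A) :: nat \<Rightarrow> 'x ^ 'q \<Rightarrow> 'x ^ 'q)
           (synth m n q (tBh2 m n q B)) (synth m n q (tCh2 m n q C)) (tD m n q D)"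
proof -
  have mn: "0 < m" "0 < n" using assms(5) by (auto simp: multirate_def)
  have bA: "\<And>t. bounded_clinear (A t)" and bB: "\<And>t. bounded_clinear (B t)"
    and bC: "\<And>t. bounded_clinear (C t)" and bD: "\<And>t. bounded_clinear (D t)"
    using assms(5) by (auto simp: multirate_def)
  have q: "0 < q" "q dvd m" "q dvd n" by (fact assms(7,8,9))+
  have mr1: "multirate (m div q) (n div q) (synth m n q (tAh1 m n q A) :: nat \<Rightarrow> 'x ^ 'q \<Rightarrow> 'x ^ 'q)
           (synth m n q (tBh1 m n q B)) (synth m n q (tCh1 m n q C)) (tD m n q D)"
    by (rule mr_tilde[OF q mn bcl_tAh1[OF bA] bcl_tBh1[OF bB] bcl_tCh1[OF bC] bD])
  have mr2: "multirate (m div q) (n div q) (synth m n q (tAh2 m n q A) :: nat \<Rightarrow> 'x ^ 'q \<Rightarrow> 'x ^ 'q)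
           (synth m n q (tBh2 m n q B)) (synth m n q (tCh2 m n q C)) (tD m n q D)"
    by (rule mr_tilde[OF q mn bcl_tAh2[OF bA] bcl_tBh2[OF bB] bcl_tCh2[OF bC] bD])
  show ?thesis
  proof
    show "mr_optimal TYPE('z) E m n A B C D (m div q) (n div q)
           (synth m n q (tAh1 m n q A) :: nat \<Rightarrow> 'x ^ 'q \<Rightarrow> 'x ^ 'q)
           (synth m n q (tBh1 m n q B)) (synth m n q (tCh1 m n q C)) (tD m n q D)"
      by (rule main_opt[OF q assms(5) mr1 K2_v1[OF q mn assms(10) _ bA bB bC]])
    show "mr_optimal TYPE('z) E m n A B C D (m div q) (n div q)
           (synth m n q (tAh2 m n q A) :: nat \<Rightarrow> 'x ^ 'q \<Rightarrow> 'x ^ 'q)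
           (synth m n q (tBh2 m n q B)) (synth m n q (tCh2 m n q C)) (tD m n q D)"
      by (rule main_opt[OF q assms(5) mr2 K2_v2[OF q mn assms(10) _ bA bB bC]])
  qed
qed

end
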